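(* Let $d_1,d_2,d_3,r_1,r_2$ be positive integers with $r_1<d_1d_2$ and $r_2\le d_2d_3$. Let $\mathrm{GQSAT}_3$ denote $\mathrm{GQSAT}$ of the following instance: - three qudits of dimensions $d_1,d_2,d_3$; - two hyperedges $\{1,2\}$ and $\{2,3\}$ with ranks $r_1$ and $r_2$. Let $(G_3,c)$ be the following tensor network template: - two inputs $s_1,s_2$ and two outputs $t_1,t_2$; - two vertices $x,y$; - edges with capacities: - $s_1$–$x$, capacity $d_1d_2-r_1$; - $x$–$t_1$, capacity $d_1$; - $x$–$y$, capacity $d_2$; - $s_2$–$y$, capacity $d_3$; - $y$–$t_2$, capacity $r_2$. Then $\mathrm{GQSAT}_3=d_3(d_1d_2-r_1)-\mathrm{QMF}(G_3,c)$.
   Context: A tensor network template $(G,c)$ consists of a finite undirected graph $G$ with edge set $E$ whose vertex set is partitioned as $S\sqcup T\sqcup V$. Every element of $S$ (inputs) and every element of $T$ (outputs) is an open end of degree $1$; the elements of $V$ are called vertices. For $u\in S\sqcup T$, $e(u)$ denotes the edge incident to $u$. A capacity function $c:E\to\mathbb{Z}_{>0}$ is given, and to each edge $e$ one associates $\mathbb{C}^{c_e}$ with a fixed basis. At each vertex $v$ of degree $d_v$ an ordering $e(v,1),\dots,e(v,d_v)$ of the incident edge-ends is fixed. A tensor assignment $\mathcal T=(\mathcal T_v)_{v\in V}$ chooses $\mathcal T_v\in\bigotimes_{i=1}^{d_v}\mathbb{C}^{c_{e(v,i)}}$ for each $v$. Let $V_S=\bigotimes_{u\in S}\mathbb{C}^{c_{e(u)}}$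 and $V_T=\bigotimes_{u\in T}\mathbb{C}^{c_{e(u)}}$. Contracting the network along all edges gives $\beta(G,c;\mathcal T)\in\mathrm{Hom}(V_S,V_T)$, whose matrix entries are $\langle I_T|\beta|I_S\rangle=\sum_W\prod_{v\in V}(\mathcal T_v)_{W|_v}$. Here $W$ ranges over all assignments of basis indices to all edges that agree with $I_S$ on the input edges and with $I_T$ on the output edges, and $W|_v$ is the tuple of indices on $e(v,1),\dots,e(v,d_v)$. The quantum max-flow is $\mathrm{QMF}(G,c)=\max_{\mathcal T}\operatorname{rank}\beta(G,c;\mathcal T)$. $\mathrm{GQSAT}$: an instance consists of $n$ qudits with dimensions $d_1,\dots,d_n$, a set of hyperedges $e\subseteq\{1,\dots,n\}$, and a rank $r_e$ for each hyperedge. For orthogonal projectors $\Pi_e$ of rank $r_e$ on $\bigotimes_{v\in e}\mathbb{C}^{d_v}$, set $H=\sum_e\Pi_e\otimes I_{\{1,\dots,n\}\setminus e}$ acting on $\bigotimes_{v=1}^n\mathbb{C}^{d_v}$. Then $\mathrm{GQSAT}$ of the instance is the minimum of $\dim\ker H$ over all such choices of projectors. This minimum equals the value of $\dim\ker H$ for a generic choice of projectors. *)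

theory Defs
  imports "Jordan_Normal_Form.Matrix_Kernel" "Jordan_Normal_Form.DL_Rank"
          "Jordan_Normal_Form.Schur_Decomposition"
begin

(* Orthogonal projector of rank r on C^N (as an N x N complex matrix). *)
definition orth_projector :: "nat \<Rightarrow> nat \<Rightarrow> complex mat \<Rightarrow> bool" where
  "orth_projector N r P \<longleftrightarrow> P \<in> carrier_mat N N \<and> P * P = P \<and> mat_adjoint P = P
      \<and> vec_space.rank N P = r"

(* Basis of C^{d1} (x) C^{d2} (x) C^{d3}: index (a,b,c) is encoded as a*d2*d3 + b*d3 + c.
   Basis of C^{d1} (x) C^{d2}: (a,b) encoded as a*d2 + b; of C^{d2} (x) C^{d3}: (b,c) as b*d3 + c. *)

(* H = Pi1 (x) I_3 + I_1 (x) Pi2, for hyperedges {1,2} and {2,3}. *)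
definition gqsat3_H :: "nat \<Rightarrow> nat \<Rightarrow> nat \<Rightarrow> complex mat \<Rightarrow> complex mat \<Rightarrow> complex mat" where
  "gqsat3_H d1 d2 d3 P1 P2 = mat (d1*d2*d3) (d1*d2*d3) (\<lambda>(i,j).
     let a = i div (d2*d3); b = (i div d3) mod d2; c = i mod d3;
         a' = j div (d2*d3); b' = (j div d3) mod d2; c' = j mod d3
     in (if c = c' then P1 $$ (a*d2+b, a'*d2+b') else 0)
      + (if a = a' then P2 $$ (b*d3+c, b'*d3+c') else 0))"

(* GQSAT of the instance: qudits of dims d1,d2,d3; hyperedges {1,2} (rank r1), {2,3} (rank r2). *)
definition GQSAT3 :: "nat \<Rightarrow> nat \<Rightarrow> nat \<Rightarrow> nat \<Rightarrow> nat \<Rightarrow> nat" where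
  "GQSAT3 d1 d2 d3 r1 r2 = Inf {kernel_dim (gqsat3_H d1 d2 d3 P1 P2) | P1 P2.
      orth_projector (d1*d2) r1 P1 \<and> orth_projector (d2*d3) r2 P2}"

(* Tensor network G_3: edges s1-x (cap m), x-t1 (cap d1), x-y (cap d2), s2-y (cap d3),
   y-t2 (cap r2). Vertex x has edge-end order (s1-x, x-t1, x-y); vertex y has
   (x-y, s2-y, y-t2). Tensors are given by their coefficient functions Tx, Ty
   (only values at indices within the capacities matter).
   beta : C^m (x) C^d3 -> C^d1 (x) C^r2; column index (i_s1,i_s2) = i_s1*d3 + i_s2,
   row index (i_t1,i_t2) = i_t1*r2 + i_t2. *)
definition G3_beta :: "nat \<Rightarrow> nat \<Rightarrow> nat \<Rightarrow> nat \<Rightarrow> nat \<Rightarrow>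
    (nat \<Rightarrow> nat \<Rightarrow> nat \<Rightarrow> complex) \<Rightarrow> (nat \<Rightarrow> nat \<Rightarrow> nat \<Rightarrow> complex) \<Rightarrow> complex mat" where
  "G3_beta m d1 d2 d3 r2 Tx Ty = mat (d1*r2) (m*d3) (\<lambda>(i,j).
     \<Sum>k<d2. Tx (j div d3) (i div r2) k * Ty k (j mod d3) (i mod r2))"

(* Quantum max-flow of (G_3, c) with c(s1-x) = m. *)
definition QMF_G3 :: "nat \<Rightarrow> nat \<Rightarrow> nat \<Rightarrow> nat \<Rightarrow> nat \<Rightarrow> nat" where
  "QMF_G3 m d1 d2 d3 r2 = Sup {vec_space.rank (d1*r2) (G3_beta m d1 d2 d3 r2 Tx Ty) | Tx Ty. True}"

end

theory Submission
  imports Defs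
begin


lemma kernel_dim_alt: "A \<in> carrier_mat nr nc \<Longrightarrow>
  kernel_dim A = vectorspace.dim class_ring (module_vec TYPE('a::field) nc\<lparr>carrier := mat_kernel (A::'a mat)\<rparr>)"
  by (rule kernel.kernel_dim, unfold_locales)

lemma mat_vec_hom: assumes A: "A \<in> carrier_mat nr nc"
  shows "(*\<^sub>v) (A::'a::field mat) \<in> LinearCombinations.module_hom class_ring (module_vec TYPE('a) nc) (module_vec TYPE('a) nr)"
  using A unfolding LinearCombinations.module_hom_def
  by (auto simp: module_vec_simps class_ring_simps mult_add_distrib_mat_vec mult_mat_vec)

lemma rank_nullity_mat: assumes A: "(A::'a::field mat) \<in> carrier_mat nr nc"
  shows "vec_space.rank nr A + kernel_dim A = nc"
proof -
  interpret L: linear_map class_ring "module_vec TYPE('a) nc" "module_vec TYPE('a) nr" "(*\<^sub>v) A"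
    apply (intro linear_map.intro mod_hom.intro)
    using vec_vs[of nc] vec_vs[of nr] apply (auto simp: vectorspace_def)[2]
    using vec_vs[of nc] vec_vs[of nr] apply (auto simp: vectorspace_def)[2]
    by (unfold_locales, rule mat_vec_hom[OF A])
  have fd: "vectorspace.fin_dim class_ring (module_vec TYPE('a) nc)"
    using vec_space.fin_dim by blast
  have im: "L.im = vec_space.col_space nr A"
    unfolding vec_space.col_space_eq[OF A] L.im_def using A by (auto simp: module_vec_simps)
  have ker: "L.ker = mat_kernel A"
    unfolding L.ker_def mat_kernel_def using A by (auto simp: module_vec_simps)
  from L.rank_nullity[OF fd]
  show ?thesis unfolding im ker kernel_dim_alt[OF A] vec_space.rank_def vec_space.dim_is_n
      vec_space.col_space_def by simp
qed

lemma kernel_vs: assumes A: "(A::'a::field mat) \<in> carrier_mat nr nc"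
  shows "vectorspace class_ring (module_vec TYPE('a) nc\<lparr>carrier := mat_kernel A\<rparr>)"
proof -
  interpret K: kernel nr nc A by (unfold_locales, rule A)
  show ?thesis by (rule K.Ker.vectorspace_axioms)
qed

lemma kernel_fin_dim: assumes A: "(A::'a::field mat) \<in> carrier_mat nr nc"
  shows "vectorspace.fin_dim class_ring (module_vec TYPE('a) nc\<lparr>carrier := mat_kernel A\<rparr>)"
proof -
  interpret K: kernel nr nc A by (unfold_locales, rule A)
  from kernel_basis_exists[OF A] obtain B where "finite B" "K.basis B" by auto
  then show ?thesis unfolding K.Ker.fin_dim_def K.Ker.basis_def by auto
qed

lemma kdim_inj:
  fixes A B M :: "'a::field mat"
  assumes A: "A \<in> carrier_mat na ca" and B: "B \<in> carrier_mat nb cb" and M: "M \<in> carrier_mat cb ca"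
  and maps: "\<And>x. x \<in> mat_kernel A \<Longrightarrow> M *\<^sub>v x \<in> mat_kernel B"
  and inj: "\<And>x. x \<in> mat_kernel A \<Longrightarrow> M *\<^sub>v x = 0\<^sub>v cb \<Longrightarrow> x = 0\<^sub>v ca"
  shows "kernel_dim A \<le> kernel_dim B"
proof -
  let ?VA = "module_vec TYPE('a) ca\<lparr>carrier := mat_kernel A\<rparr>"
  let ?VB = "module_vec TYPE('a) cb\<lparr>carrier := mat_kernel B\<rparr>"
  let ?T = "(*\<^sub>v) M"
  interpret VA: vectorspace class_ring ?VA by (rule kernel_vs[OF A])
  interpret VB: vectorspace class_ring ?VB by (rule kernel_vs[OF B])
  have kA: "\<And>x. x \<in> mat_kernel A \<Longrightarrow> x \<in> carrier_vec ca" using A mat_kernel_carrier by blast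
  have hom: "?T \<in> LinearCombinations.module_hom class_ring ?VA ?VB"
  proof (unfold LinearCombinations.module_hom_def, intro CollectI conjI allI impI)
    show "?T \<in> carrier ?VA \<rightarrow> carrier ?VB" using maps by auto
    fix m1 m2 assume "m1 \<in> carrier ?VA \<and> m2 \<in> carrier ?VA"
    then have "m1 \<in> carrier_vec ca" "m2 \<in> carrier_vec ca" using kA by auto
    then show "?T (m1 \<oplus>\<^bsub>?VA\<^esub> m2) = ?T m1 \<oplus>\<^bsub>?VB\<^esub> ?T m2"
      using M by (simp add: module_vec_simps mult_add_distrib_mat_vec)
  next
    fix r :: 'a and m assume "r \<in> carrier class_ring \<and> m \<in> carrier ?VA"
    then have "m \<in> carrier_vec ca" using kA by auto
    then show "?T (r \<odot>\<^bsub>?VA\<^esub> m) = r \<odot>\<^bsub>?VB\<^esub> ?T m"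
      using M by (simp add: module_vec_simps mult_mat_vec)
  qed
  interpret L1: linear_map class_ring ?VA ?VB ?T
    by (intro linear_map.intro mod_hom.intro, unfold_locales, rule hom)
  have sub: "VectorSpace.subspace class_ring L1.imT ?VB" by (rule L1.imT_is_subspace)
  let ?W = "VB.vs L1.imT"
  interpret W: vectorspace class_ring ?W by (rule VB.subspace_is_vs[OF sub])
  have hom2: "?T \<in> LinearCombinations.module_hom class_ring ?VA ?W"
    using hom unfolding LinearCombinations.module_hom_def L1.im_def by auto
  interpret L2: linear_map class_ring ?VA ?W ?T
    by (intro linear_map.intro mod_hom.intro, unfold_locales, rule hom2)
  have fdA: "VA.fin_dim" by (rule kernel_fin_dim[OF A])
  have fdB: "VB.fin_dim" by (rule kernel_fin_dim[OF B])
  have surj: "?T ` carrier ?VA = carrier ?W" unfolding L1.im_def by auto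
  have fdW: "W.fin_dim" by (rule L2.rank_nullity_main(2)[OF fdA surj])
  have injT: "inj_on ?T (carrier ?VA)"
  proof (rule inj_onI)
    fix x y assume x: "x \<in> carrier ?VA" and y: "y \<in> carrier ?VA" and eq: "?T x = ?T y"
    have xy: "x - y \<in> mat_kernel A" using x y A 
      by (auto simp: mat_kernel_def mult_minus_distrib_mat_vec)
    have "M *\<^sub>v (x - y) = M *\<^sub>v x - M *\<^sub>v y" using x y kA M 
      by (auto simp: mult_minus_distrib_mat_vec)
    also have "\<dots> = 0\<^sub>v cb" using eq M x kA by auto
    finally have e: "x - y = 0\<^sub>v ca" using inj[OF xy] by auto
    have xc: "x \<in> carrier_vec ca" "y \<in> carrier_vec ca" using x y kA by auto
    show "x = y"
    proof (rule eq_vecI)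
      fix i assume i: "i < dim_vec y"
      have "(x - y) $ i = 0" unfolding e using i xc by simp
      then show "x $ i = y $ i" using i xc by simp
    next
      show "dim_vec x = dim_vec y" using xc by simp
    qed
  qed
  have k0: "vectorspace.dim class_ring (VA.vs L2.kerT) = 0"
    by (rule L2.inj_imp_dim_ker0[OF injT])
  have imW: "W.vs L2.imT = ?W" unfolding L2.im_def L1.im_def using surj by auto
  have "vectorspace.dim class_ring (W.vs L2.imT) + vectorspace.dim class_ring (VA.vs L2.kerT) = VA.dim"
    by (rule L2.rank_nullity[OF fdA])
  then have e: "W.dim = VA.dim" using k0 imW by simp
  have "W.dim \<le> VB.dim" by (rule VB.subspace_dim[OF sub fdB fdW])
  then show ?thesis unfolding kernel_dim_alt[OF A] kernel_dim_alt[OF B] using e by simp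
qed



lemma sum_split_mult: "(\<Sum>l<b*d. (f l :: 'a::comm_monoid_add)) = (\<Sum>q<b. \<Sum>r<d. f (q*d + r))" for b d :: nat
proof (induction b)
  case 0 then show ?case by simp
next
  case (Suc b)
  have "{..<Suc b * d} = {..<b*d} \<union> {b*d..<b*d+d}" by auto
  then have "(\<Sum>l<Suc b*d. f l) = (\<Sum>l<b*d. f l) + (\<Sum>l\<in>{b*d..<b*d+d}. f l)"
    by (simp add: sum.union_disjoint ivl_disj_int_one(2) lessThan_atLeast0)
  also have "(\<Sum>l\<in>{b*d..<b*d+d}. f l) = (\<Sum>r<d. f (b*d + r))"
  proof -
    have "(\<Sum>l\<in>{b*d..<b*d+d}. f l) = (\<Sum>r\<in>{0..<d}. f (r + b*d))"
      using sum.shift_bounds_nat_ivl[of f 0 "b*d" d] by (simp add: add.commute)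
    then show ?thesis by (simp add: add.commute lessThan_atLeast0)
  qed
  finally show ?case using Suc by simp
qed

lemma mult_entry: assumes "A \<in> carrier_mat a b" "B \<in> carrier_mat b c" "i < a" "j < c"
  shows "(A * B) $$ (i,j) = (\<Sum>l<b. A $$ (i,l) * B $$ (l,j))"
  using assms by (auto simp: scalar_prod_def lessThan_atLeast0 intro!: sum.cong)

lemma adj_eq: "mat_adjoint (A::complex mat) = mat (dim_col A) (dim_row A) (\<lambda>(i,j). cnj (A $$ (j,i)))"
  unfolding mat_adjoint_def by (rule eq_matI, auto simp: mat_of_rows_def)

lemma adj_carrier[simp]: "A \<in> carrier_mat n m \<Longrightarrow> mat_adjoint (A::complex mat) \<in> carrier_mat m n"
  unfolding adj_eq by auto

lemma adj_dims[simp]: "dim_row (mat_adjoint (A::complex mat)) = dim_col A"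
  "dim_col (mat_adjoint (A::complex mat)) = dim_row A"
  unfolding adj_eq by auto

lemma adj_index[simp]: "i < dim_col A \<Longrightarrow> j < dim_row A \<Longrightarrow> mat_adjoint (A::complex mat) $$ (i,j) = cnj (A $$ (j,i))"
  unfolding adj_eq by auto

lemma adj_adj[simp]: "mat_adjoint (mat_adjoint (A::complex mat)) = A"
  by (rule eq_matI, auto)

lemma adj_mult: assumes A: "(A::complex mat) \<in> carrier_mat a b" and B: "B \<in> carrier_mat b c"
  shows "mat_adjoint (A * B) = mat_adjoint B * mat_adjoint A"
proof (rule eq_matI)
  fix i j assume i: "i < dim_row (mat_adjoint B * mat_adjoint A)" and j: "j < dim_col (mat_adjoint B * mat_adjoint A)"
  then have i': "i < c" and j': "j < a" using A B by auto
  have "mat_adjoint (A * B) $$ (i,j) = cnj ((A*B) $$ (j,i))" using i' j' A B by simp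
  also have "\<dots> = (\<Sum>l<b. cnj (A $$ (j,l)) * cnj (B $$ (l,i)))"
    using mult_entry[OF A B j' i'] by (simp add: cnj_sum)
  also have "\<dots> = (mat_adjoint B * mat_adjoint A) $$ (i,j)"
    by (subst mult_entry[of _ c b _ a], insert A B i' j', auto intro: sum.cong)
  finally show "mat_adjoint (A * B) $$ (i, j) = (mat_adjoint B * mat_adjoint A) $$ (i, j)" .
qed (insert A B, auto)

lemma adj_one[simp]: "mat_adjoint (1\<^sub>m n :: complex mat) = 1\<^sub>m n"
  by (rule eq_matI, auto)

lemma adj_minus: assumes "(A::complex mat) \<in> carrier_mat a b" "B \<in> carrier_mat a b"
  shows "mat_adjoint (A - B) = mat_adjoint A - mat_adjoint B"
  by (rule eq_matI, insert assms, auto)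

lemma adj_add: assumes "(A::complex mat) \<in> carrier_mat a b" "B \<in> carrier_mat a b"
  shows "mat_adjoint (A + B) = mat_adjoint A + mat_adjoint B"
  by (rule eq_matI, insert assms, auto)



lemma divmod_aux: "r < (d::nat) \<Longrightarrow> (q*d+r) div d = q" "r < (d::nat) \<Longrightarrow> (q*d+r) mod d = r"
  by auto

lemma lt_aux: "q < b \<Longrightarrow> r < d \<Longrightarrow> q*d + r < b*(d::nat)"
proof -
  assume q: "q < b" and r: "r < d"
  have "q*d + r < q*d + d" using r by simp
  also have "\<dots> = Suc q * d" by simp
  also have "\<dots> \<le> b * d" using q by (intro mult_le_mono1, simp)
  finally show ?thesis .
qed

definition L1 :: "nat \<Rightarrow> complex mat \<Rightarrow> complex mat" where
 "L1 d X = mat (dim_row X * d) (dim_col X * d) (\<lambda>(i,j). if i mod d = j mod d then X $$ (i div d, j div d) else 0)"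

definition L2 :: "nat \<Rightarrow> complex mat \<Rightarrow> complex mat" where
 "L2 d Y = mat (d * dim_row Y) (d * dim_col Y) (\<lambda>(i,j). if i div dim_row Y = j div dim_col Y then Y $$ (i mod dim_row Y, j mod dim_col Y) else 0)"

lemma L1_dims[simp]: "dim_row (L1 d X) = dim_row X * d" "dim_col (L1 d X) = dim_col X * d"
  unfolding L1_def by auto
lemma L2_dims[simp]: "dim_row (L2 d X) = d * dim_row X" "dim_col (L2 d X) = d * dim_col X"
  unfolding L2_def by auto

lemma L1_carrier[simp]: "X \<in> carrier_mat a b \<Longrightarrow> L1 d X \<in> carrier_mat (a*d) (b*d)"
  unfolding L1_def by auto
lemma L2_carrier[simp]: "X \<in> carrier_mat a b \<Longrightarrow> L2 d X \<in> carrier_mat (d*a) (d*b)"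
  unfolding L2_def by auto

lemma L1_index: "X \<in> carrier_mat a b \<Longrightarrow> i < a*d \<Longrightarrow> j < b*d \<Longrightarrow>
  L1 d X $$ (i,j) = (if i mod d = j mod d then X $$ (i div d, j div d) else 0)"
  unfolding L1_def by auto
lemma L2_index: "X \<in> carrier_mat a b \<Longrightarrow> i < d*a \<Longrightarrow> j < d*b \<Longrightarrow>
  L2 d X $$ (i,j) = (if i div a = j div b then X $$ (i mod a, j mod b) else 0)"
  unfolding L2_def by auto

lemma L1_mult: assumes X: "X \<in> carrier_mat a b" and Y: "Y \<in> carrier_mat b c" and d: "0 < d"
  shows "L1 d (X * Y) = L1 d X * L1 d Y"
proof (rule eq_matI)
  fix i j assume "i < dim_row (L1 d X * L1 d Y)" "j < dim_col (L1 d X * L1 d Y)"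
  then have i: "i < a*d" and j: "j < c*d" using X Y by auto
  have id: "i div d < a" using i by (simp add: less_mult_imp_div_less)
  have jd: "j div d < c" using j by (simp add: less_mult_imp_div_less)
  have im: "i mod d < d" "j mod d < d" using d by auto
  have "(L1 d X * L1 d Y) $$ (i,j) = (\<Sum>l<b*d. L1 d X $$ (i,l) * L1 d Y $$ (l,j))"
    by (rule mult_entry[OF L1_carrier[OF X] L1_carrier[OF Y] i j])
  also have "\<dots> = (\<Sum>q<b. \<Sum>r<d. L1 d X $$ (i,q*d+r) * L1 d Y $$ (q*d+r,j))"
    by (rule sum_split_mult)
  also have "\<dots> = (\<Sum>q<b. \<Sum>r<d. if r = i mod d then X $$ (i div d, q) * (if i mod d = j mod d then Y $$ (q, j div d) else 0) else 0)"
  proof (intro sum.cong refl)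
    fix q r assume q: "q \<in> {..<b}" and r: "r \<in> {..<d}"
    have lt: "q*d + r < b*d" using q r lt_aux by auto
    show "L1 d X $$ (i,q*d+r) * L1 d Y $$ (q*d+r,j) = (if r = i mod d then X $$ (i div d, q) * (if i mod d = j mod d then Y $$ (q, j div d) else 0) else 0)"
      using L1_index[OF X i lt] L1_index[OF Y lt j] r divmod_aux[of r d q] by auto
  qed
  also have "\<dots> = (\<Sum>q<b. X $$ (i div d, q) * (if i mod d = j mod d then Y $$ (q, j div d) else 0))"
    using im by (simp add: sum.delta)
  also have "\<dots> = L1 d (X * Y) $$ (i,j)"
    using L1_index[OF mult_carrier_mat[OF X Y] i j] mult_entry[OF X Y id jd] by auto
  finally show "L1 d (X * Y) $$ (i, j) = (L1 d X * L1 d Y) $$ (i, j)" ..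
qed (insert X Y, auto simp: L1_def)

lemma L2_mult: assumes X: "X \<in> carrier_mat a b" and Y: "Y \<in> carrier_mat b c"
  shows "L2 d (X * Y) = L2 d X * L2 d Y"
proof (rule eq_matI)
  fix i j assume "i < dim_row (L2 d X * L2 d Y)" "j < dim_col (L2 d X * L2 d Y)"
  then have i: "i < d*a" and j: "j < d*c" using X Y by auto
  have a: "0 < a" and c: "0 < c" using i j by (auto intro: ccontr)
  have id: "i div a < d" using i by (simp add: less_mult_imp_div_less mult.commute)
  have im: "i mod a < a" "j mod c < c" using a c by auto
  have "(L2 d X * L2 d Y) $$ (i,j) = (\<Sum>l<d*b. L2 d X $$ (i,l) * L2 d Y $$ (l,j))"
    by (rule mult_entry[OF L2_carrier[OF X] L2_carrier[OF Y] i j])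
  also have "\<dots> = (\<Sum>p<d. \<Sum>s<b. L2 d X $$ (i,p*b+s) * L2 d Y $$ (p*b+s,j))"
    by (rule sum_split_mult)
  also have "\<dots> = (\<Sum>p<d. \<Sum>s<b. if p = i div a then X $$ (i mod a, s) * (if i div a = j div c then Y $$ (s, j mod c) else 0) else 0)"
  proof (intro sum.cong refl)
    fix p s assume p: "p \<in> {..<d}" and s: "s \<in> {..<b}"
    have lt: "p*b + s < d*b" using p s lt_aux by auto
    show "L2 d X $$ (i,p*b+s) * L2 d Y $$ (p*b+s,j) = (if p = i div a then X $$ (i mod a, s) * (if i div a = j div c then Y $$ (s, j mod c) else 0) else 0)"
      using L2_index[OF X i lt] L2_index[OF Y lt j] s divmod_aux[of s b p] by auto
  qed
  also have "\<dots> = (\<Sum>s<b. X $$ (i mod a, s) * (if i div a = j div c then Y $$ (s, j mod c) else 0))"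
    by (subst sum.swap, insert id, simp add: sum.delta)
  also have "\<dots> = L2 d (X * Y) $$ (i,j)"
    using L2_index[OF mult_carrier_mat[OF X Y] i j] mult_entry[OF X Y im] by auto
  finally show "L2 d (X * Y) $$ (i, j) = (L2 d X * L2 d Y) $$ (i, j)" ..
qed (insert X Y, auto)

lemma L1_one: "0 < d \<Longrightarrow> L1 d (1\<^sub>m a) = 1\<^sub>m (a*d)"
proof (rule eq_matI)
  fix i j assume d: "0 < d" and i: "i < dim_row (1\<^sub>m (a*d))" and j: "j < dim_col (1\<^sub>m (a*d))"
  then have i': "i < a*d" and j': "j < a*d" by auto
  have "i div d < a" "j div d < a" using i' j' by (auto simp: less_mult_imp_div_less)
  moreover have "(i = j) = (i mod d = j mod d \<and> i div d = j div d)"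
    by (metis div_mult_mod_eq)
  ultimately show "L1 d (1\<^sub>m a) $$ (i, j) = 1\<^sub>m (a * d) $$ (i, j)"
    using L1_index[OF one_carrier_mat i' j'] i' j' by auto
qed auto

lemma L2_one: "L2 d (1\<^sub>m a) = 1\<^sub>m (d*a)"
proof (rule eq_matI)
  fix i j assume i: "i < dim_row (1\<^sub>m (d*a))" and j: "j < dim_col (1\<^sub>m (d*a))"
  then have i': "i < d*a" and j': "j < d*a" by auto
  then have "0 < a" by (auto intro: ccontr)
  then have "i mod a < a" "j mod a < a" by auto
  moreover have "(i = j) = (i mod a = j mod a \<and> i div a = j div a)"
    by (metis div_mult_mod_eq)
  ultimately show "L2 d (1\<^sub>m a) $$ (i, j) = 1\<^sub>m (d*a) $$ (i, j)"
    using L2_index[OF one_carrier_mat i' j'] i' j' by auto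
qed auto

lemma L1_adj: "0 < d \<Longrightarrow> X \<in> carrier_mat a b \<Longrightarrow> L1 d (mat_adjoint X) = mat_adjoint (L1 d X)"
  by (rule eq_matI, auto simp: L1_def less_mult_imp_div_less)

lemma L2_adj: "X \<in> carrier_mat a b \<Longrightarrow> L2 d (mat_adjoint X) = mat_adjoint (L2 d X)"
proof (rule eq_matI)
  fix i j assume X: "X \<in> carrier_mat a b" and i: "i < dim_row (mat_adjoint (L2 d X))" and j: "j < dim_col (mat_adjoint (L2 d X))"
  then have i': "i < d*b" and j': "j < d*a" by auto
  then have "0 < a" "0 < b" by (auto intro: ccontr)
  then show "L2 d (mat_adjoint X) $$ (i, j) = mat_adjoint (L2 d X) $$ (i, j)"
    using L2_index[OF adj_carrier[OF X] i' j'] L2_index[OF X j' i'] X i' j' by auto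
qed auto

lemma L1_minus: "A \<in> carrier_mat a b \<Longrightarrow> B \<in> carrier_mat a b \<Longrightarrow> L1 d (A - B) = L1 d A - L1 d B"
  by (rule eq_matI, auto simp: L1_def less_mult_imp_div_less)



lemma H_eq: assumes P1: "P1 \<in> carrier_mat (d1*d2) (d1*d2)" and P2: "P2 \<in> carrier_mat (d2*d3) (d2*d3)"
  and d2: "0 < d2" and d3: "0 < d3"
  shows "gqsat3_H d1 d2 d3 P1 P2 = L1 d3 P1 + L2 d1 P2"
proof (rule eq_matI)
  fix i j assume i: "i < dim_row (L1 d3 P1 + L2 d1 P2)" and j: "j < dim_col (L1 d3 P1 + L2 d1 P2)"
  then have i': "i < d1*d2*d3" and j': "j < d1*d2*d3" using P1 P2 by auto
  have i2: "i < d1*(d2*d3)" and j2: "j < d1*(d2*d3)" using i' j' by (auto simp: mult.assoc)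
  have e1: "i div (d2*d3) * d2 + i div d3 mod d2 = i div d3" for i
    by (metis div_mult2_eq div_mult_mod_eq mult.commute)
  have e2: "i div d3 mod d2 * d3 + i mod d3 = i mod (d2*d3)" for i
    by (metis add.commute mod_mult2_eq mult.commute)
  show "gqsat3_H d1 d2 d3 P1 P2 $$ (i, j) = (L1 d3 P1 + L2 d1 P2) $$ (i, j)"
    unfolding gqsat3_H_def using i' j' P1 P2
    by (simp add: Let_def L1_index[OF P1 i' j'] L2_index[OF P2 i2 j2] e1 e2)
qed (insert P1 P2, auto simp: gqsat3_H_def mult.assoc)

definition BM :: "nat \<Rightarrow> nat \<Rightarrow> nat \<Rightarrow> (nat \<Rightarrow> nat \<Rightarrow> nat \<Rightarrow> complex) \<Rightarrow> complex mat" where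
  "BM m d1 d2 Tx = mat (d1*d2) m (\<lambda>(u,s). Tx s (u div d2) (u mod d2))"
definition QM :: "nat \<Rightarrow> nat \<Rightarrow> nat \<Rightarrow> (nat \<Rightarrow> nat \<Rightarrow> nat \<Rightarrow> complex) \<Rightarrow> complex mat" where
  "QM r2 d2 d3 Ty = mat r2 (d2*d3) (\<lambda>(t,v). Ty (v div d3) (v mod d3) t)"

lemma BM_dims[simp]: "dim_row (BM m d1 d2 Tx) = d1*d2" "dim_col (BM m d1 d2 Tx) = m" unfolding BM_def by auto
lemma QM_dims[simp]: "dim_row (QM r2 d2 d3 Ty) = r2" "dim_col (QM r2 d2 d3 Ty) = d2*d3" unfolding QM_def by auto
lemma BM_carrier[simp]: "BM m d1 d2 Tx \<in> carrier_mat (d1*d2) m" unfolding BM_def by auto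
lemma QM_carrier[simp]: "QM r2 d2 d3 Ty \<in> carrier_mat r2 (d2*d3)" unfolding QM_def by auto

lemma BM_inv: assumes "B \<in> carrier_mat (d1*d2) m" shows "BM m d1 d2 (\<lambda>s t k. B $$ (t*d2+k, s)) = B"
  by (rule eq_matI, insert assms, auto simp: BM_def)
lemma QM_inv: assumes "Q \<in> carrier_mat r2 (d2*d3)" shows "QM r2 d2 d3 (\<lambda>k c t. Q $$ (t, k*d3+c)) = Q"
  by (rule eq_matI, insert assms, auto simp: QM_def)

lemma beta_eq: assumes d2: "0 < d2" and d3: "0 < d3"
  shows "G3_beta m d1 d2 d3 r2 Tx Ty = L2 d1 (QM r2 d2 d3 Ty) * L1 d3 (BM m d1 d2 Tx)"
proof (rule eq_matI)
  let ?Q = "QM r2 d2 d3 Ty" and ?B = "BM m d1 d2 Tx"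
  fix i j assume i: "i < dim_row (L2 d1 ?Q * L1 d3 ?B)" and j: "j < dim_col (L2 d1 ?Q * L1 d3 ?B)"
  then have i': "i < d1*r2" and j': "j < m*d3" by auto
  have r2: "0 < r2" using i' by (auto intro: ccontr)
  have idv: "i div r2 < d1" using i' by (simp add: less_mult_imp_div_less mult.commute)
  have Bc: "?B \<in> carrier_mat (d1*(d2*d3) div d3) m" using d3 by (simp add: mult.assoc)
  have "(L2 d1 ?Q * L1 d3 ?B) $$ (i,j) = (\<Sum>l<d1*(d2*d3). L2 d1 ?Q $$ (i,l) * L1 d3 ?B $$ (l,j))"
    using i' j' by (auto simp: scalar_prod_def lessThan_atLeast0 intro!: sum.cong)
  also have "\<dots> = (\<Sum>p<d1. \<Sum>s<d2*d3. L2 d1 ?Q $$ (i,p*(d2*d3)+s) * L1 d3 ?B $$ (p*(d2*d3)+s,j))"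
    by (rule sum_split_mult)
  also have "\<dots> = (\<Sum>p<d1. \<Sum>k<d2. \<Sum>c<d3. L2 d1 ?Q $$ (i,p*(d2*d3)+(k*d3+c)) * L1 d3 ?B $$ (p*(d2*d3)+(k*d3+c),j))"
    by (rule sum.cong[OF refl], rule sum_split_mult)
  also have "\<dots> = (\<Sum>p<d1. \<Sum>k<d2. \<Sum>c<d3. if p = i div r2 then (if c = j mod d3 then
        Ty k (j mod d3) (i mod r2) * Tx (j div d3) (i div r2) k else 0) else 0)"
  proof (intro sum.cong refl)
    fix p k c assume p: "p \<in> {..<d1}" and k: "k \<in> {..<d2}" and c: "c \<in> {..<d3}"
    let ?l = "p*(d2*d3)+(k*d3+c)"
    have s: "k*d3+c < d2*d3" using k c lt_aux by auto
    have l2: "?l < d1*(d2*d3)" using p s lt_aux by auto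
    have l1: "?l < d1*d2*d3" using l2 by (simp add: mult.assoc)
    have dv: "?l div (d2*d3) = p" "?l mod (d2*d3) = k*d3+c" using divmod_aux[OF s, of p] by auto
    have dv3: "?l div d3 = p*d2 + k" "?l mod d3 = c"
    proof -
      have e: "?l = (p*d2 + k)*d3 + c" by (simp add: algebra_simps)
      show "?l div d3 = p*d2 + k" "?l mod d3 = c" unfolding e using divmod_aux[of c d3 "p*d2+k"] c by auto
    qed
    have pk: "p*d2+k < d1*d2" using p k lt_aux by auto
    show "L2 d1 ?Q $$ (i,?l) * L1 d3 ?B $$ (?l,j) = (if p = i div r2 then (if c = j mod d3 then
        Ty k (j mod d3) (i mod r2) * Tx (j div d3) (i div r2) k else 0) else 0)"
      using L2_index[OF QM_carrier i' l2] L1_index[OF BM_carrier l1 j'] dv dv3 r2 pk j' s c k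
      by (auto simp: QM_def BM_def less_mult_imp_div_less)
  qed
  also have "\<dots> = (\<Sum>k<d2. Tx (j div d3) (i div r2) k * Ty k (j mod d3) (i mod r2))"
  proof -
    let ?F = "\<lambda>k. Ty k (j mod d3) (i mod r2) * Tx (j div d3) (i div r2) k"
    have jm: "j mod d3 < d3" using d3 by auto
    have inner: "(\<Sum>c<d3. if p = i div r2 then (if c = j mod d3 then ?F k else 0) else 0) = (if p = i div r2 then ?F k else 0)" for p k
      using jm by (cases "p = i div r2", auto)
    have "(\<Sum>p<d1. \<Sum>k<d2. \<Sum>c<d3. if p = i div r2 then (if c = j mod d3 then ?F k else 0) else 0)
       = (\<Sum>p<d1. \<Sum>k<d2. if p = i div r2 then ?F k else 0)" using inner by simp
    also have "\<dots> = (\<Sum>k<d2. \<Sum>p<d1. if p = i div r2 then ?F k else 0)" by (rule sum.swap)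
    also have "\<dots> = (\<Sum>k<d2. ?F k)" using idv by simp
    finally show ?thesis by (simp add: mult.commute)
  qed
  also have "\<dots> = G3_beta m d1 d2 d3 r2 Tx Ty $$ (i,j)"
    unfolding G3_beta_def using i' j' by simp
  finally show "G3_beta m d1 d2 d3 r2 Tx Ty $$ (i, j) = (L2 d1 ?Q * L1 d3 ?B) $$ (i, j)" ..
qed (auto simp: G3_beta_def)



definition ipn :: "nat \<Rightarrow> complex vec \<Rightarrow> complex vec \<Rightarrow> complex" where
  "ipn n x y = (\<Sum>i<n. cnj (x $ i) * y $ i)"

lemma mult_mat_vec_entry: "A \<in> carrier_mat n m \<Longrightarrow> x \<in> carrier_vec m \<Longrightarrow> i < n \<Longrightarrow>
  (A *\<^sub>v x) $ i = (\<Sum>j<m. A $$ (i,j) * x $ j)"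
  by (auto simp: scalar_prod_def lessThan_atLeast0 intro!: sum.cong)

lemma ip_adj: assumes A: "A \<in> carrier_mat n m" and x: "x \<in> carrier_vec m" and y: "y \<in> carrier_vec n"
  shows "ipn m x (mat_adjoint A *\<^sub>v y) = ipn n (A *\<^sub>v x) y"
proof -
  have "ipn m x (mat_adjoint A *\<^sub>v y) = (\<Sum>i<m. cnj (x $ i) * (\<Sum>j<n. cnj (A $$ (j,i)) * y $ j))"
    unfolding ipn_def
    by (rule sum.cong[OF refl], subst mult_mat_vec_entry[OF adj_carrier[OF A] y], insert A, auto)
  also have "\<dots> = (\<Sum>i<m. \<Sum>j<n. cnj (x $ i) * cnj (A $$ (j,i)) * y $ j)"
    by (simp add: sum_distrib_left mult.assoc)
  also have "\<dots> = (\<Sum>j<n. \<Sum>i<m. cnj (x $ i) * cnj (A $$ (j,i)) * y $ j)" by (rule sum.swap)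
  also have "\<dots> = (\<Sum>j<n. cnj (\<Sum>i<m. A $$ (j,i) * x $ i) * y $ j)"
    by (simp add: cnj_sum sum_distrib_right sum_distrib_left mult.commute mult.left_commute)
  also have "\<dots> = ipn n (A *\<^sub>v x) y"
    unfolding ipn_def
    by (rule sum.cong[OF refl], subst mult_mat_vec_entry[OF A x], auto simp: cnj_sum)
  finally show ?thesis .
qed

lemma ip_self: "ipn n x x = of_real (\<Sum>i<n. (cmod (x $ i))^2)"
  unfolding ipn_def of_real_sum
  by (rule sum.cong[OF refl], simp add: complex_norm_square mult.commute del: of_real_power)

lemma ip_zero: assumes x: "x \<in> carrier_vec n" and z: "(\<Sum>i<n. (cmod (x $ i))^2) = 0"
  shows "x = 0\<^sub>v n"
proof (rule eq_vecI)
  fix i assume "i < dim_vec (0\<^sub>v n)" then have i: "i < n" by simp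
  have "(cmod (x $ i))^2 = 0" using z sum_nonneg_eq_0_iff[of "{..<n}" "\<lambda>i. (cmod (x $ i))^2"] i by auto
  then show "x $ i = 0\<^sub>v n $ i" using i by simp
qed (insert x, auto)

lemma ip_add: "x \<in> carrier_vec n \<Longrightarrow> y \<in> carrier_vec n \<Longrightarrow> ipn n z (x + y) = ipn n z x + ipn n z y"
  unfolding ipn_def by (simp add: distrib_left sum.distrib)

definition herm_idem :: "nat \<Rightarrow> complex mat \<Rightarrow> bool" where
  "herm_idem n P \<longleftrightarrow> P \<in> carrier_mat n n \<and> mat_adjoint P = P \<and> P * P = P"

lemma herm_idem_ip: assumes P: "herm_idem n P" and v: "v \<in> carrier_vec n"
  shows "ipn n v (P *\<^sub>v v) = of_real (\<Sum>i<n. (cmod ((P *\<^sub>v v) $ i))^2)"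
proof -
  have Pc: "P \<in> carrier_mat n n" and h: "mat_adjoint P = P" and i: "P * P = P" using P unfolding herm_idem_def by auto
  have "P *\<^sub>v v = mat_adjoint P *\<^sub>v (P *\<^sub>v v)"
    unfolding h using Pc v by (metis assoc_mult_mat_vec i)
  then have "ipn n v (P *\<^sub>v v) = ipn n v (mat_adjoint P *\<^sub>v (P *\<^sub>v v))" by simp
  also have "\<dots> = ipn n (P *\<^sub>v v) (P *\<^sub>v v)" using ip_adj[OF Pc v] Pc v by simp
  finally show ?thesis using ip_self by simp
qed

lemma psd_split: assumes P: "herm_idem n P" and Q: "herm_idem n Q" and v: "v \<in> carrier_vec n"
  and z: "(P + Q) *\<^sub>v v = 0\<^sub>v n"
  shows "P *\<^sub>v v = 0\<^sub>v n"
proof -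
  have Pc: "P \<in> carrier_mat n n" and Qc: "Q \<in> carrier_mat n n" using P Q unfolding herm_idem_def by auto
  let ?a = "\<Sum>i<n. (cmod ((P *\<^sub>v v) $ i))^2" and ?b = "\<Sum>i<n. (cmod ((Q *\<^sub>v v) $ i))^2"
  have "0 = ipn n v ((P + Q) *\<^sub>v v)" unfolding z ipn_def by simp
  also have "\<dots> = ipn n v (P *\<^sub>v v) + ipn n v (Q *\<^sub>v v)"
    using Pc Qc v by (simp add: add_mult_distrib_mat_vec ip_add)
  also have "\<dots> = of_real (?a + ?b)" using herm_idem_ip[OF P v] herm_idem_ip[OF Q v] by simp
  finally have "?a + ?b = 0" by (metis of_real_eq_0_iff)
  moreover have "?a \<ge> 0" "?b \<ge> 0" by (auto intro: sum_nonneg)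
  ultimately have "?a = 0" by linarith
  then show ?thesis using ip_zero[of "P *\<^sub>v v" n] Pc v by auto
qed

lemma kdim_zero_rows: "kernel_dim (0\<^sub>m 0 k :: complex mat) = k"
proof -
  have "vec_space.rank 0 (0\<^sub>m 0 k :: complex mat) = 0" by (rule vec_space.rank_0I)
  then show ?thesis using rank_nullity_mat[of "0\<^sub>m 0 k :: complex mat" 0 k] by auto
qed

lemma kdim_one: "kernel_dim (1\<^sub>m k :: complex mat) = 0"
  unfolding kernel_dim_def using kernel_one_mat(1)[of k] by simp

lemma ker_zero_rows: "mat_kernel (0\<^sub>m 0 k :: complex mat) = carrier_vec k"
  unfolding mat_kernel_def by auto

lemma rank_mult_le: assumes A: "(A::complex mat) \<in> carrier_mat n a" and Y: "Y \<in> carrier_mat a b"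
  shows "vec_space.rank n (A * Y) \<le> vec_space.rank n A"
proof -
  interpret vec_space "TYPE(complex)" n .
  define W1 where "W1 = span (set (cols A))"
  define S where "S = span (set (cols (A * Y)))"
  have AY: "A * Y \<in> carrier_mat n b" using A Y by auto
  have cA: "set (cols A) \<subseteq> carrier_vec n" using A by (auto simp: cols_def)
  have cAY: "set (cols (A*Y)) \<subseteq> carrier_vec n" using A Y by (auto simp: cols_def)
  have "S \<subseteq> W1"
  proof -
    have "S = col_space (A*Y)" unfolding S_def col_space_def ..
    also have "\<dots> \<subseteq> col_space A"
    proof
      fix z assume "z \<in> col_space (A*Y)"
      then obtain x where x: "x \<in> carrier_vec b" and z: "z = (A * Y) *\<^sub>v x" and zc: "z \<in> carrier_vec n"
        unfolding col_space_eq[OF AY] using AY by auto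
      have "z = A *\<^sub>v (Y *\<^sub>v x)" using z A Y x by auto
      moreover have "Y *\<^sub>v x \<in> carrier_vec a" using Y x by auto
      ultimately show "z \<in> col_space A" unfolding col_space_eq[OF A] using A zc by auto
    qed
    finally show ?thesis unfolding W1_def col_space_def .
  qed
  have sW1: "VectorSpace.subspace class_ring W1 V" unfolding W1_def using cA by (simp add: span_is_subspace)
  have sS: "VectorSpace.subspace class_ring S V" unfolding S_def using cAY by (simp add: span_is_subspace)
  have sub: "VectorSpace.subspace class_ring S (vs W1)" by (rule nested_subspaces[OF sW1 sS \<open>S \<subseteq> W1\<close>])
  have fW1: "vectorspace.fin_dim class_ring (vs W1)" unfolding W1_def using fin_dim_span_cols[OF A] .
  have fS: "vectorspace.fin_dim class_ring (vs S)" unfolding S_def using fin_dim_span_cols[OF AY] .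
  interpret W: vectorspace class_ring "vs W1" by (rule subspace_is_vs[OF sW1])
  have "vectorspace.dim class_ring (W.vs S) \<le> W.dim"
    by (rule W.subspace_dim[OF sub fW1], simp add: fS)
  then show ?thesis unfolding rank_def W1_def[symmetric] S_def[symmetric] by simp
qed

lemma rank_mult_left: assumes C: "(C::complex mat) \<in> carrier_mat p n" and D: "D \<in> carrier_mat n c"
  shows "vec_space.rank p (C * D) \<le> vec_space.rank n D"
proof -
  have CD: "C * D \<in> carrier_mat p c" using C D by auto
  have "kernel_dim D \<le> kernel_dim (C * D)"
  proof (rule kdim_inj[OF D CD one_carrier_mat])
    fix x assume x: "x \<in> mat_kernel D"
    then have xc: "x \<in> carrier_vec c" and Dx: "D *\<^sub>v x = 0\<^sub>v n" using mat_kernelD[OF D] by auto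
    have "(C * D) *\<^sub>v x = C *\<^sub>v (D *\<^sub>v x)" using C D xc by auto
    also have "\<dots> = 0\<^sub>v p" using Dx C by auto
    finally show "1\<^sub>m c *\<^sub>v x \<in> mat_kernel (C * D)" using xc CD by (auto intro: mat_kernelI)
  next
    fix x assume x: "x \<in> mat_kernel D" "1\<^sub>m c *\<^sub>v x = 0\<^sub>v c"
    then show "x = 0\<^sub>v c" using mat_kernelD[OF D] by auto
  qed
  then show ?thesis using rank_nullity_mat[OF D] rank_nullity_mat[OF CD] by linarith
qed



lemma mat_mult_zero_vec[simp]: "A \<in> carrier_mat n k \<Longrightarrow> A *\<^sub>v 0\<^sub>v k = (0\<^sub>v n :: complex vec)"
  by (intro eq_vecI, auto)

definition isom :: "nat \<Rightarrow> nat \<Rightarrow> complex mat \<Rightarrow> bool" where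
  "isom n k U \<longleftrightarrow> U \<in> carrier_mat n k \<and> mat_adjoint U * U = 1\<^sub>m k"

lemma isom_kernel0: assumes U: "isom n k U" and x: "x \<in> carrier_vec k" and z: "U *\<^sub>v x = 0\<^sub>v n"
  shows "x = 0\<^sub>v k"
proof -
  have Uc: "U \<in> carrier_mat n k" and I: "mat_adjoint U * U = 1\<^sub>m k" using U unfolding isom_def by auto
  have "x = (mat_adjoint U * U) *\<^sub>v x" using I x by auto
  also have "\<dots> = mat_adjoint U *\<^sub>v (U *\<^sub>v x)" by (rule assoc_mult_mat_vec[OF adj_carrier[OF Uc] Uc x])
  also have "\<dots> = 0\<^sub>v k" unfolding z using Uc by auto
  finally show ?thesis .
qed

lemma isom_rank: assumes U: "isom n k U" shows "vec_space.rank n U = k"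
proof -
  have Uc: "U \<in> carrier_mat n k" using U unfolding isom_def by auto
  have "kernel_dim U \<le> kernel_dim (1\<^sub>m k :: complex mat)"
  proof (rule kdim_inj[OF Uc one_carrier_mat one_carrier_mat])
    fix x assume "x \<in> mat_kernel U"
    then have x: "x \<in> carrier_vec k" "U *\<^sub>v x = 0\<^sub>v n" using mat_kernelD[OF Uc] by auto
    then have "x = 0\<^sub>v k" using isom_kernel0[OF U] by auto
    then show "1\<^sub>m k *\<^sub>v x \<in> mat_kernel (1\<^sub>m k)" by (auto intro: mat_kernelI)
  next
    fix x assume "x \<in> mat_kernel U" "1\<^sub>m k *\<^sub>v x = 0\<^sub>v k"
    then show "x = 0\<^sub>v k" using mat_kernelD[OF Uc] by auto
  qed
  then show ?thesis using kdim_one[of k] rank_nullity_mat[OF Uc] by simp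
qed

lemma isom_proj_rank: assumes U: "isom n k U" shows "vec_space.rank n (U * mat_adjoint U) = k"
proof -
  have Uc: "U \<in> carrier_mat n k" and I: "mat_adjoint U * U = 1\<^sub>m k" using U unfolding isom_def by auto
  have Ua: "mat_adjoint U \<in> carrier_mat k n" using Uc by simp
  have "vec_space.rank n (U * mat_adjoint U) \<le> k" using rank_mult_le[OF Uc Ua] isom_rank[OF U] by simp
  moreover have "U * mat_adjoint U * U = U" using Uc Ua I by (simp add: assoc_mult_mat[OF Uc Ua Uc])
  then have "k \<le> vec_space.rank n (U * mat_adjoint U)"
    using rank_mult_le[OF mult_carrier_mat[OF Uc Ua] Uc] isom_rank[OF U] by simp
  ultimately show ?thesis by simp
qed

lemma isom_proj_herm_idem: assumes U: "isom n k U" shows "herm_idem n (U * mat_adjoint U)"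
proof -
  have Uc: "U \<in> carrier_mat n k" and I: "mat_adjoint U * U = 1\<^sub>m k" using U unfolding isom_def by auto
  have Ua: "mat_adjoint U \<in> carrier_mat k n" using Uc by simp
  have "U * mat_adjoint U * (U * mat_adjoint U) = U * (mat_adjoint U * (U * mat_adjoint U))"
    by (rule assoc_mult_mat[OF Uc Ua mult_carrier_mat[OF Uc Ua]])
  also have "mat_adjoint U * (U * mat_adjoint U) = (mat_adjoint U * U) * mat_adjoint U"
    by (rule assoc_mult_mat[OF Ua Uc Ua, symmetric])
  also have "U * ((mat_adjoint U * U) * mat_adjoint U) = U * mat_adjoint U" using I left_mult_one_mat[OF Ua] by simp
  finally show ?thesis unfolding herm_idem_def using Uc Ua adj_mult[OF Uc Ua] by simp
qed

lemma herm_idem_compl: assumes P: "herm_idem n P" shows "herm_idem n (1\<^sub>m n - P)"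
proof -
  have Pc: "P \<in> carrier_mat n n" and h: "mat_adjoint P = P" and i: "P * P = P" using P unfolding herm_idem_def by auto
  have c: "1\<^sub>m n - P \<in> carrier_mat n n" using Pc by auto
  have "(1\<^sub>m n - P) * (1\<^sub>m n - P) = 1\<^sub>m n * (1\<^sub>m n - P) - P * (1\<^sub>m n - P)"
    by (rule minus_mult_distrib_mat[OF one_carrier_mat Pc c])
  also have "P * (1\<^sub>m n - P) = P * 1\<^sub>m n - P * P" by (rule mult_minus_distrib_mat[OF Pc one_carrier_mat Pc])
  also have "1\<^sub>m n * (1\<^sub>m n - P) - (P * 1\<^sub>m n - P * P) = (1\<^sub>m n - P) - (P - P * P)" using Pc c by simp
  also have "\<dots> = 1\<^sub>m n - P" unfolding i using Pc by (intro eq_matI, auto)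
  finally show ?thesis unfolding herm_idem_def using Pc c adj_minus[OF one_carrier_mat Pc] h by simp
qed

lemma isom_compl_kdim: assumes U: "isom n k U" shows "kernel_dim (1\<^sub>m n - U * mat_adjoint U) = k"
proof -
  have Uc: "U \<in> carrier_mat n k" and I: "mat_adjoint U * U = 1\<^sub>m k" using U unfolding isom_def by auto
  have Ua: "mat_adjoint U \<in> carrier_mat k n" using Uc by simp
  let ?P = "1\<^sub>m n - U * mat_adjoint U"
  have Pc: "?P \<in> carrier_mat n n" using Uc by auto
  have PU: "?P * U = 0\<^sub>m n k"
  proof -
    have "?P * U = 1\<^sub>m n * U - U * mat_adjoint U * U" using Uc Ua by (simp add: minus_mult_distrib_mat[of _ n n])
    also have "U * mat_adjoint U * U = U" using Uc Ua I by (simp add: assoc_mult_mat[OF Uc Ua Uc])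
    finally show ?thesis using Uc by (intro eq_matI, auto)
  qed
  have "k \<le> kernel_dim ?P"
  proof -
    have "kernel_dim (0\<^sub>m 0 k :: complex mat) \<le> kernel_dim ?P"
    proof (rule kdim_inj[OF zero_carrier_mat Pc Uc])
      fix x assume "x \<in> mat_kernel (0\<^sub>m 0 k :: complex mat)"
      then have x: "x \<in> carrier_vec k" unfolding ker_zero_rows .
      have "?P *\<^sub>v (U *\<^sub>v x) = (?P * U) *\<^sub>v x" using Pc Uc x by auto
      also have "\<dots> = 0\<^sub>v n" unfolding PU using x by auto
      finally show "U *\<^sub>v x \<in> mat_kernel ?P" using Pc Uc x by (auto intro: mat_kernelI)
    next
      fix x assume "x \<in> mat_kernel (0\<^sub>m 0 k :: complex mat)" "U *\<^sub>v x = 0\<^sub>v n"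
      then show "x = 0\<^sub>v k" using isom_kernel0[OF U] unfolding ker_zero_rows by auto
    qed
    then show ?thesis using kdim_zero_rows by simp
  qed
  moreover have "kernel_dim ?P \<le> k"
  proof -
    have "kernel_dim ?P \<le> kernel_dim (0\<^sub>m 0 k :: complex mat)"
    proof (rule kdim_inj[OF Pc zero_carrier_mat Ua])
      fix x assume "x \<in> mat_kernel ?P"
      then have "x \<in> carrier_vec n" using mat_kernelD[OF Pc] by auto
      then show "mat_adjoint U *\<^sub>v x \<in> mat_kernel (0\<^sub>m 0 k :: complex mat)"
        unfolding ker_zero_rows using Ua by auto
    next
      fix x assume xk: "x \<in> mat_kernel ?P" and z: "mat_adjoint U *\<^sub>v x = 0\<^sub>v k"
      then have x: "x \<in> carrier_vec n" and Px: "?P *\<^sub>v x = 0\<^sub>v n" using mat_kernelD[OF Pc] by auto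
      have "?P *\<^sub>v x = x - U *\<^sub>v (mat_adjoint U *\<^sub>v x)"
        using Uc Ua x assoc_mult_mat_vec[OF Uc Ua x] by (simp add: minus_mult_distrib_mat_vec[of _ n n])
      also have "\<dots> = x" unfolding z using Uc x by simp
      finally show "x = 0\<^sub>v n" using Px by simp
    qed
    then show ?thesis using kdim_zero_rows by simp
  qed
  ultimately show ?thesis by simp
qed

lemma isom_compl_rank: assumes U: "isom n k U" shows "vec_space.rank n (1\<^sub>m n - U * mat_adjoint U) = n - k"
proof -
  have Uc: "U \<in> carrier_mat n k" using U unfolding isom_def by auto
  have Pc: "1\<^sub>m n - U * mat_adjoint U \<in> carrier_mat n n" using Uc by auto
  show ?thesis using rank_nullity_mat[OF Pc] isom_compl_kdim[OF U] by simp
qed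

definition Jm :: "nat \<Rightarrow> nat \<Rightarrow> complex mat" where
  "Jm a b = mat a b (\<lambda>(i,j). if i = j then 1 else 0)"

lemma Jm_carrier[simp]: "Jm a b \<in> carrier_mat a b" unfolding Jm_def by auto

lemma Jm_isom: assumes "b \<le> a" shows "mat_adjoint (Jm a b) * Jm a b = 1\<^sub>m b"
proof (rule eq_matI)
  fix i j assume "i < dim_row (1\<^sub>m b)" "j < dim_col (1\<^sub>m b)"
  then have i: "i < b" and j: "j < b" by auto
  have "(mat_adjoint (Jm a b) * Jm a b) $$ (i,j) = (\<Sum>l<a. mat_adjoint (Jm a b) $$ (i,l) * Jm a b $$ (l,j))"
    by (rule mult_entry[OF adj_carrier[OF Jm_carrier] Jm_carrier i j])
  also have "\<dots> = (\<Sum>l<a. if l = i then (if i = j then 1 else 0) else 0)"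
  proof (rule sum.cong[OF refl])
    fix l assume "l \<in> {..<a}"
    then show "mat_adjoint (Jm a b) $$ (i,l) * Jm a b $$ (l,j) = (if l = i then (if i = j then 1 else 0) else 0)"
      using i j assms by (auto simp: Jm_def adj_index)
  qed
  also have "\<dots> = 1\<^sub>m b $$ (i,j)" using i j assms by auto
  finally show "(mat_adjoint (Jm a b) * Jm a b) $$ (i, j) = 1\<^sub>m b $$ (i, j)" .
qed (auto simp: Jm_def)

lemma isom_mult: assumes U: "isom n k U" and W: "isom k b W" shows "isom n b (U * W)"
proof -
  have Uc: "U \<in> carrier_mat n k" and I: "mat_adjoint U * U = 1\<^sub>m k" using U unfolding isom_def by auto
  have Wc: "W \<in> carrier_mat k b" and I2: "mat_adjoint W * W = 1\<^sub>m b" using W unfolding isom_def by auto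
  have "mat_adjoint (U * W) * (U * W) = mat_adjoint W * (mat_adjoint U * U) * W"
    unfolding adj_mult[OF Uc Wc]
    using assoc_mult_mat[OF adj_carrier[OF Wc] adj_carrier[OF Uc] mult_carrier_mat[OF Uc Wc]]
      assoc_mult_mat[OF adj_carrier[OF Uc] Uc Wc] assoc_mult_mat[OF adj_carrier[OF Wc] mult_carrier_mat[OF adj_carrier[OF Uc] Uc] Wc]
    by simp
  also have "\<dots> = 1\<^sub>m b" unfolding I using Wc I2 by simp
  finally show ?thesis unfolding isom_def using Uc Wc by auto
qed



lemma isom_entry: "isom n k U \<longleftrightarrow> U \<in> carrier_mat n k \<and>
   (\<forall>i<k. \<forall>j<k. (\<Sum>l<n. cnj (U $$ (l,i)) * U $$ (l,j)) = (if i = j then 1 else 0))"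
proof
  assume U: "isom n k U"
  then have Uc: "U \<in> carrier_mat n k" and I: "mat_adjoint U * U = 1\<^sub>m k" unfolding isom_def by auto
  show "U \<in> carrier_mat n k \<and> (\<forall>i<k. \<forall>j<k. (\<Sum>l<n. cnj (U $$ (l,i)) * U $$ (l,j)) = (if i = j then 1 else 0))"
  proof (intro conjI allI impI Uc)
    fix i j assume i: "i < k" and j: "j < k"
    have "(\<Sum>l<n. cnj (U $$ (l,i)) * U $$ (l,j)) = (mat_adjoint U * U) $$ (i,j)"
      using mult_entry[OF adj_carrier[OF Uc] Uc i j] Uc i by (auto intro!: sum.cong)
    then show "(\<Sum>l<n. cnj (U $$ (l,i)) * U $$ (l,j)) = (if i = j then 1 else 0)" unfolding I using i j by simp
  qed
next
  assume h: "U \<in> carrier_mat n k \<and> (\<forall>i<k. \<forall>j<k. (\<Sum>l<n. cnj (U $$ (l,i)) * U $$ (l,j)) = (if i = j then 1 else 0))"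
  then have Uc: "U \<in> carrier_mat n k" by auto
  have "mat_adjoint U * U = 1\<^sub>m k"
  proof (rule eq_matI)
    fix i j assume "i < dim_row (1\<^sub>m k)" "j < dim_col (1\<^sub>m k)"
    then have i: "i < k" and j: "j < k" by auto
    have "(mat_adjoint U * U) $$ (i,j) = (\<Sum>l<n. cnj (U $$ (l,i)) * U $$ (l,j))"
      using mult_entry[OF adj_carrier[OF Uc] Uc i j] Uc i by (auto intro!: sum.cong)
    then show "(mat_adjoint U * U) $$ (i,j) = 1\<^sub>m k $$ (i,j)" using h i j by simp
  qed (insert Uc, auto)
  then show "isom n k U" unfolding isom_def using Uc by auto
qed

lemma gs_base: "A \<in> carrier_mat n 0 \<Longrightarrow> \<exists>k U X Y. k \<le> 0 \<and> isom n k U \<and> X \<in> carrier_mat k 0 \<and> Y \<in> carrier_mat 0 k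
   \<and> A = U * X \<and> U = A * Y"
  by (rule exI[of _ 0], rule exI[of _ "0\<^sub>m n 0"], rule exI[of _ "0\<^sub>m 0 0"], rule exI[of _ "0\<^sub>m 0 0"],
      auto simp: isom_entry intro!: eq_matI)

lemma gs_step:
  assumes A: "A \<in> carrier_mat n (Suc p)" and U: "isom n k U" and X: "X \<in> carrier_mat k p" and Y: "Y \<in> carrier_mat p k"
  and hA: "\<And>i j. i < n \<Longrightarrow> j < p \<Longrightarrow> A $$ (i,j) = (\<Sum>l<k. U $$ (i,l) * X $$ (l,j))"
  and hU: "\<And>i j. i < n \<Longrightarrow> j < k \<Longrightarrow> U $$ (i,j) = (\<Sum>l<p. A $$ (i,l) * Y $$ (l,j))"
  shows "\<exists>k' U' X' Y'. k' \<le> Suc k \<and> isom n k' U' \<and> X' \<in> carrier_mat k' (Suc p) \<and> Y' \<in> carrier_mat (Suc p) k'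
     \<and> A = U' * X' \<and> U' = A * Y'"
proof -
  have Uc: "U \<in> carrier_mat n k" using U unfolding isom_def by auto
  have orthU: "\<And>i j. i < k \<Longrightarrow> j < k \<Longrightarrow> (\<Sum>l<n. cnj (U $$ (l,i)) * U $$ (l,j)) = (if i = j then 1 else 0)"
    using U unfolding isom_entry by auto
  define c where "c l = (\<Sum>i<n. cnj (U $$ (i,l)) * A $$ (i,p))" for l
  define a' where "a' i = A $$ (i,p) - (\<Sum>l<k. U $$ (i,l) * c l)" for i
  have Ap: "A $$ (i,p) = (\<Sum>l<k. U $$ (i,l) * c l) + a' i" for i unfolding a'_def by simp
  have orth: "(\<Sum>i<n. cnj (U $$ (i,l)) * a' i) = 0" if l: "l < k" for l
  proof -
    have "(\<Sum>i<n. cnj (U $$ (i,l)) * a' i) = c l - (\<Sum>i<n. \<Sum>m<k. cnj (U $$ (i,l)) * U $$ (i,m) * c m)"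
      unfolding a'_def c_def by (simp add: right_diff_distrib sum_subtractf sum_distrib_left mult.assoc)
    also have "(\<Sum>i<n. \<Sum>m<k. cnj (U $$ (i,l)) * U $$ (i,m) * c m) = (\<Sum>m<k. (\<Sum>i<n. cnj (U $$ (i,l)) * U $$ (i,m)) * c m)"
      by (subst sum.swap, simp add: sum_distrib_right)
    also have "\<dots> = (\<Sum>m<k. (if l = m then 1 else 0) * c m)" using orthU l by (intro sum.cong refl, auto)
    also have "\<dots> = (\<Sum>m<k. if m = l then c m else 0)" by (intro sum.cong refl, auto)
    also have "\<dots> = c l" using l by simp
    finally show ?thesis by simp
  qed
  show ?thesis
  proof (cases "\<forall>i<n. a' i = 0")
    case True
    define X' where "X' = mat k (Suc p) (\<lambda>(i,j). if j < p then X $$ (i,j) else c i)"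
    define Y' where "Y' = mat (Suc p) k (\<lambda>(i,j). if i < p then Y $$ (i,j) else 0)"
    have X'c: "X' \<in> carrier_mat k (Suc p)" and Y'c: "Y' \<in> carrier_mat (Suc p) k" unfolding X'_def Y'_def by auto
    have eA: "A = U * X'"
    proof (rule eq_matI)
      fix i j assume "i < dim_row (U * X')" "j < dim_col (U * X')"
      then have i: "i < n" and j: "j < Suc p" using Uc X'c by auto
      have "(U * X') $$ (i,j) = (\<Sum>l<k. U $$ (i,l) * X' $$ (l,j))" by (rule mult_entry[OF Uc X'c i j])
      also have "\<dots> = A $$ (i,j)"
      proof (cases "j < p")
        case True then show ?thesis using hA[OF i True] j by (simp add: X'_def)
      next
        case False then have "j = p" using j by simp
        then show ?thesis using Ap[of i] True i j by (simp add: X'_def)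
      qed
      finally show "A $$ (i,j) = (U * X') $$ (i,j)" ..
    qed (insert A Uc X'c, auto)
    have eU: "U = A * Y'"
    proof (rule eq_matI)
      fix i j assume "i < dim_row (A * Y')" "j < dim_col (A * Y')"
      then have i: "i < n" and j: "j < k" using A Y'c by auto
      have "(A * Y') $$ (i,j) = (\<Sum>l<Suc p. A $$ (i,l) * Y' $$ (l,j))" by (rule mult_entry[OF A Y'c i j])
      also have "\<dots> = (\<Sum>l<p. A $$ (i,l) * Y $$ (l,j))" using j by (simp add: Y'_def)
      finally show "U $$ (i,j) = (A * Y') $$ (i,j)" using hU[OF i j] by simp
    qed (insert A Uc Y'c, auto)
    have k: "k \<le> Suc k" by simp
    show ?thesis
      by (rule exI[of _ k], rule exI[of _ U], rule exI[of _ X'], rule exI[of _ Y'], intro conjI, fact+)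
  next
    case False
    then obtain i0 where i0: "i0 < n" "a' i0 \<noteq> 0" by auto
    define s where "s = (\<Sum>i<n. (cmod (a' i))^2)"
    have "(cmod (a' i0))^2 > 0" using i0 by simp
    moreover have "(cmod (a' i0))^2 \<le> s" unfolding s_def using i0
      by (intro member_le_sum, auto)
    ultimately have s0: "s > 0" by linarith
    define nu where "nu = complex_of_real (sqrt s)"
    have nu0: "nu \<noteq> 0" unfolding nu_def using s0 by simp
    have nunu: "cnj nu * nu = complex_of_real s" unfolding nu_def using s0
      by (simp add: power2_eq_square[symmetric] of_real_power[symmetric] del: of_real_power)
    define u where "u i = a' i / nu" for i
    define U' where "U' = mat n (Suc k) (\<lambda>(i,j). if j < k then U $$ (i,j) else u i)"
    define X' where "X' = mat (Suc k) (Suc p) (\<lambda>(i,j). if i < k then (if j < p then X $$ (i,j) else c i) else (if j < p then 0 else nu))"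
    define S where "S i = (\<Sum>l<k. Y $$ (i,l) * c l)" for i
    define Y' where "Y' = mat (Suc p) (Suc k) (\<lambda>(i,j). if j < k then (if i < p then Y $$ (i,j) else 0) else (if i < p then - S i / nu else 1 / nu))"
    have U'c: "U' \<in> carrier_mat n (Suc k)" and X'c: "X' \<in> carrier_mat (Suc k) (Suc p)" and Y'c: "Y' \<in> carrier_mat (Suc p) (Suc k)"
      unfolding U'_def X'_def Y'_def by auto
    have orthu: "(\<Sum>l<n. cnj (U $$ (l,i)) * u l) = 0" if i: "i < k" for i
      using orth[OF i] unfolding u_def by (simp add: sum_divide_distrib[symmetric])
    have orthu': "(\<Sum>l<n. cnj (u l) * U $$ (l,i)) = 0" if i: "i < k" for i
    proof -
      have "(\<Sum>l<n. cnj (u l) * U $$ (l,i)) = cnj (\<Sum>l<n. cnj (U $$ (l,i)) * u l)" by (simp add: cnj_sum mult.commute)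
      then show ?thesis using orthu[OF i] by simp
    qed
    have uu: "(\<Sum>l<n. cnj (u l) * u l) = 1"
    proof -
      have "(\<Sum>l<n. cnj (u l) * u l) = (\<Sum>l<n. cnj (a' l) * a' l) / (cnj nu * nu)"
        unfolding u_def by (simp add: sum_divide_distrib)
      also have "(\<Sum>l<n. cnj (a' l) * a' l) = complex_of_real s"
        unfolding s_def of_real_sum by (rule sum.cong[OF refl], simp add: complex_norm_square mult.commute del: of_real_power)
      finally show ?thesis unfolding nunu using s0 by simp
    qed
    have iU': "isom n (Suc k) U'" unfolding isom_entry
    proof (intro conjI allI impI U'c)
      fix i j assume i: "i < Suc k" and j: "j < Suc k"
      show "(\<Sum>l<n. cnj (U' $$ (l,i)) * U' $$ (l,j)) = (if i = j then 1 else 0)"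
      proof -
        have e: "(\<Sum>l<n. cnj (U' $$ (l,i)) * U' $$ (l,j)) =
          (\<Sum>l<n. cnj (if i < k then U $$ (l,i) else u l) * (if j < k then U $$ (l,j) else u l))"
          using i j by (intro sum.cong refl, simp add: U'_def)
        show ?thesis unfolding e using i j orthU orthu orthu' uu
          by (cases "i < k"; cases "j < k"; auto)
      qed
    qed
    have eA': "A = U' * X'"
    proof (rule eq_matI)
      fix i j assume "i < dim_row (U' * X')" "j < dim_col (U' * X')"
      then have i: "i < n" and j: "j < Suc p" using U'c X'c by auto
      have "(U' * X') $$ (i,j) = (\<Sum>l<Suc k. U' $$ (i,l) * X' $$ (l,j))" by (rule mult_entry[OF U'c X'c i j])
      also have "\<dots> = (\<Sum>l<k. U $$ (i,l) * X' $$ (l,j)) + u i * X' $$ (k,j)"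
        using i by (simp add: U'_def)
      also have "\<dots> = A $$ (i,j)"
      proof (cases "j < p")
        case True then show ?thesis using hA[OF i True] j by (simp add: X'_def)
      next
        case False then have "j = p" using j by simp
        then show ?thesis using Ap[of i] i j nu0 by (simp add: X'_def u_def)
      qed
      finally show "A $$ (i,j) = (U' * X') $$ (i,j)" ..
    qed (insert A U'c X'c, auto)
    have eU': "U' = A * Y'"
    proof (rule eq_matI)
      fix i j assume "i < dim_row (A * Y')" "j < dim_col (A * Y')"
      then have i: "i < n" and j: "j < Suc k" using A Y'c by auto
      have "(A * Y') $$ (i,j) = (\<Sum>l<Suc p. A $$ (i,l) * Y' $$ (l,j))" by (rule mult_entry[OF A Y'c i j])
      also have "\<dots> = (\<Sum>l<p. A $$ (i,l) * Y' $$ (l,j)) + A $$ (i,p) * Y' $$ (p,j)" by simp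
      also have "\<dots> = U' $$ (i,j)"
      proof (cases "j < k")
        case True then show ?thesis using hU[OF i True] j i by (simp add: Y'_def U'_def)
      next
        case False then have jk: "j = k" using j by simp
        have "(\<Sum>l<p. A $$ (i,l) * Y' $$ (l,j)) = (\<Sum>l<p. - (A $$ (i,l) * S l) / nu)"
          unfolding jk by (intro sum.cong refl, simp add: Y'_def)
        also have "\<dots> = - (\<Sum>l<p. A $$ (i,l) * S l) / nu"
          by (simp add: sum_divide_distrib[symmetric] sum_negf)
        also have "(\<Sum>l<p. A $$ (i,l) * S l) = (\<Sum>m<k. (\<Sum>l<p. A $$ (i,l) * Y $$ (l,m)) * c m)"
          unfolding S_def by (simp add: sum_distrib_left sum_distrib_right mult.assoc, rule sum.swap)
        also have "\<dots> = (\<Sum>m<k. U $$ (i,m) * c m)" using hU[OF i] by simp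
        finally have "(\<Sum>l<p. A $$ (i,l) * Y' $$ (l,j)) + A $$ (i,p) * Y' $$ (p,j)
            = - (\<Sum>m<k. U $$ (i,m) * c m) / nu + A $$ (i,p) / nu" unfolding jk by (simp add: Y'_def)
        also have "\<dots> = a' i / nu" unfolding a'_def by (simp add: diff_divide_distrib)
        finally show ?thesis using i jk by (simp add: U'_def u_def)
      qed
      finally show "U' $$ (i,j) = (A * Y') $$ (i,j)" ..
    qed (insert A U'c Y'c, auto)
    have k: "Suc k \<le> Suc k" by simp
    show ?thesis
      by (rule exI[of _ "Suc k"], rule exI[of _ U'], rule exI[of _ X'], rule exI[of _ Y'], intro conjI, fact+)
  qed
qed

lemma gs2: "A \<in> carrier_mat n p \<Longrightarrow> \<exists>k U X Y. k \<le> p \<and> isom n k U \<and> X \<in> carrier_mat k p \<and> Y \<in> carrier_mat p k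
   \<and> A = U * X \<and> U = A * Y"
proof (induction p arbitrary: A)
  case 0 then show ?case by (rule gs_base)
next
  case (Suc p)
  have A: "A \<in> carrier_mat n (Suc p)" by fact
  define A0 where "A0 = mat n p (\<lambda>(i,j). A $$ (i,j))"
  have A0c: "A0 \<in> carrier_mat n p" unfolding A0_def by auto
  from Suc.IH[OF A0c] obtain k U X Y where k: "k \<le> p" and U: "isom n k U" and X: "X \<in> carrier_mat k p"
    and Y: "Y \<in> carrier_mat p k" and eA: "A0 = U * X" and eU: "U = A0 * Y" by blast
  have Uc: "U \<in> carrier_mat n k" using U unfolding isom_def by auto
  have hA: "A $$ (i,j) = (\<Sum>l<k. U $$ (i,l) * X $$ (l,j))" if i: "i < n" and j: "j < p" for i j
  proof -
    have "A $$ (i,j) = A0 $$ (i,j)" using i j unfolding A0_def by simp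
    also have "\<dots> = (U * X) $$ (i,j)" using eA by simp
    also have "\<dots> = (\<Sum>l<k. U $$ (i,l) * X $$ (l,j))" by (rule mult_entry[OF Uc X i j])
    finally show ?thesis .
  qed
  have hU: "U $$ (i,j) = (\<Sum>l<p. A $$ (i,l) * Y $$ (l,j))" if i: "i < n" and j: "j < k" for i j
  proof -
    have "U $$ (i,j) = (A0 * Y) $$ (i,j)" using eU by simp
    also have "\<dots> = (\<Sum>l<p. A0 $$ (i,l) * Y $$ (l,j))" by (rule mult_entry[OF A0c Y i j])
    also have "\<dots> = (\<Sum>l<p. A $$ (i,l) * Y $$ (l,j))" using i unfolding A0_def by (intro sum.cong refl, simp)
    finally show ?thesis .
  qed
  from gs_step[OF A U X Y hA hU] obtain k' U' X' Y' where "k' \<le> Suc k" "isom n k' U'" "X' \<in> carrier_mat k' (Suc p)"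
    "Y' \<in> carrier_mat (Suc p) k'" "A = U' * X'" "U' = A * Y'" by blast
  moreover have "k' \<le> Suc p" using k \<open>k' \<le> Suc k\<close> by simp
  ultimately show ?case by blast
qed



lemma rank_le_nr: assumes A: "(A::complex mat) \<in> carrier_mat nr nc" shows "vec_space.rank nr A \<le> nr"
proof -
  interpret vec_space "TYPE(complex)" nr .
  have cA: "set (cols A) \<subseteq> carrier_vec nr" using A by (auto simp: cols_def)
  have s: "VectorSpace.subspace class_ring (span (set (cols A))) V" using cA by (simp add: span_is_subspace)
  have "vectorspace.dim class_ring (vs (span (set (cols A)))) \<le> dim"
    by (rule subspace_dim[OF s fin_dim fin_dim_span_cols[OF A]])
  then show ?thesis unfolding rank_def dim_is_n by simp
qed

lemma kdim_pos_nonzero: assumes B: "(B::complex mat) \<in> carrier_mat nr nc" and k: "0 < kernel_dim B"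
  shows "\<exists>x. x \<in> mat_kernel B \<and> x \<noteq> 0\<^sub>v nc"
proof (rule ccontr)
  assume "\<not> ?thesis"
  then have z: "\<And>x. x \<in> mat_kernel B \<Longrightarrow> x = 0\<^sub>v nc" by auto
  have "kernel_dim B \<le> kernel_dim (1\<^sub>m nc :: complex mat)"
  proof (rule kdim_inj[OF B one_carrier_mat one_carrier_mat])
    fix x assume "x \<in> mat_kernel B"
    then have "x = 0\<^sub>v nc" using z by auto
    then show "1\<^sub>m nc *\<^sub>v x \<in> mat_kernel (1\<^sub>m nc)" by (auto intro: mat_kernelI)
  next
    fix x assume "x \<in> mat_kernel B" "1\<^sub>m nc *\<^sub>v x = 0\<^sub>v nc"
    then show "x = 0\<^sub>v nc" using z by auto
  qed
  then show False using k kdim_one by simp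
qed

lemma ext1: assumes U: "isom n k U" and kn: "k < n"
  shows "\<exists>U'. isom n (Suc k) U' \<and> U = U' * Jm (Suc k) k"
proof -
  have Uc: "U \<in> carrier_mat n k" using U unfolding isom_def by auto
  have Ua: "mat_adjoint U \<in> carrier_mat k n" using Uc by simp
  have "vec_space.rank k (mat_adjoint U) \<le> k" by (rule rank_le_nr[OF Ua])
  then have "0 < kernel_dim (mat_adjoint U)" using rank_nullity_mat[OF Ua] kn by linarith
  from kdim_pos_nonzero[OF Ua this] obtain x where xk: "x \<in> mat_kernel (mat_adjoint U)" and x0: "x \<noteq> 0\<^sub>v n" by auto
  have x: "x \<in> carrier_vec n" and Ux: "mat_adjoint U *\<^sub>v x = 0\<^sub>v k" using mat_kernelD[OF Ua xk] by auto
  obtain i0 where i0: "i0 < n" "x $ i0 \<noteq> 0" using x x0 by (metis eq_vecI index_zero_vec carrier_vecD)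
  define s where "s = (\<Sum>i<n. (cmod (x $ i))^2)"
  have "(cmod (x $ i0))^2 > 0" using i0 by simp
  moreover have "(cmod (x $ i0))^2 \<le> s" unfolding s_def using i0 by (intro member_le_sum, auto)
  ultimately have s0: "s > 0" by linarith
  define nu where "nu = complex_of_real (sqrt s)"
  have nu0: "nu \<noteq> 0" unfolding nu_def using s0 by simp
  have nunu: "cnj nu * nu = complex_of_real s" unfolding nu_def using s0
    by (simp add: power2_eq_square[symmetric] of_real_power[symmetric] del: of_real_power)
  define u where "u i = x $ i / nu" for i
  define U' where "U' = mat n (Suc k) (\<lambda>(i,j). if j < k then U $$ (i,j) else u i)"
  have U'c: "U' \<in> carrier_mat n (Suc k)" unfolding U'_def by auto
  have orthU: "\<And>i j. i < k \<Longrightarrow> j < k \<Longrightarrow> (\<Sum>l<n. cnj (U $$ (l,i)) * U $$ (l,j)) = (if i = j then 1 else 0)"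
    using U unfolding isom_entry by auto
  have orthx: "(\<Sum>l<n. cnj (U $$ (l,i)) * x $ l) = 0" if i: "i < k" for i
  proof -
    have "(\<Sum>l<n. cnj (U $$ (l,i)) * x $ l) = (mat_adjoint U *\<^sub>v x) $ i"
      using mult_mat_vec_entry[OF Ua x i] Uc i by (auto intro!: sum.cong)
    then show ?thesis using Ux i by simp
  qed
  have orthu: "(\<Sum>l<n. cnj (U $$ (l,i)) * u l) = 0" if i: "i < k" for i
    using orthx[OF i] unfolding u_def by (simp add: sum_divide_distrib[symmetric])
  have orthu': "(\<Sum>l<n. cnj (u l) * U $$ (l,i)) = 0" if i: "i < k" for i
  proof -
    have "(\<Sum>l<n. cnj (u l) * U $$ (l,i)) = cnj (\<Sum>l<n. cnj (U $$ (l,i)) * u l)" by (simp add: cnj_sum mult.commute)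
    then show ?thesis using orthu[OF i] by simp
  qed
  have uu: "(\<Sum>l<n. cnj (u l) * u l) = 1"
  proof -
    have "(\<Sum>l<n. cnj (u l) * u l) = (\<Sum>l<n. cnj (x $ l) * x $ l) / (cnj nu * nu)"
      unfolding u_def by (simp add: sum_divide_distrib)
    also have "(\<Sum>l<n. cnj (x $ l) * x $ l) = complex_of_real s"
      unfolding s_def of_real_sum by (rule sum.cong[OF refl], simp add: complex_norm_square mult.commute del: of_real_power)
    finally show ?thesis unfolding nunu using s0 by simp
  qed
  have iU': "isom n (Suc k) U'" unfolding isom_entry
  proof (intro conjI allI impI U'c)
    fix i j assume i: "i < Suc k" and j: "j < Suc k"
    have e: "(\<Sum>l<n. cnj (U' $$ (l,i)) * U' $$ (l,j)) =
      (\<Sum>l<n. cnj (if i < k then U $$ (l,i) else u l) * (if j < k then U $$ (l,j) else u l))"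
      using i j by (intro sum.cong refl, simp add: U'_def)
    show "(\<Sum>l<n. cnj (U' $$ (l,i)) * U' $$ (l,j)) = (if i = j then 1 else 0)"
      unfolding e using i j orthU orthu orthu' uu by (cases "i < k"; cases "j < k"; auto)
  qed
  have "U = U' * Jm (Suc k) k"
  proof (rule eq_matI)
    fix i j assume "i < dim_row (U' * Jm (Suc k) k)" "j < dim_col (U' * Jm (Suc k) k)"
    then have i: "i < n" and j: "j < k" using U'c by (auto simp: Jm_def)
    have "(U' * Jm (Suc k) k) $$ (i,j) = (\<Sum>l<Suc k. U' $$ (i,l) * Jm (Suc k) k $$ (l,j))"
      by (rule mult_entry[OF U'c Jm_carrier i j])
    also have "\<dots> = (\<Sum>l<Suc k. if l = j then U $$ (i,j) else 0)"
      using i j by (intro sum.cong refl, auto simp: Jm_def U'_def)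
    also have "\<dots> = U $$ (i,j)" using j by simp
    finally show "U $$ (i,j) = (U' * Jm (Suc k) k) $$ (i,j)" ..
  qed (insert Uc U'c, auto simp: Jm_def)
  then show ?thesis using iU' by blast
qed

lemma Jm_mult: "k \<le> q \<Longrightarrow> Jm (Suc q) q * Jm q k = Jm (Suc q) k"
proof (rule eq_matI)
  fix i j assume kq: "k \<le> q" and "i < dim_row (Jm (Suc q) k)" "j < dim_col (Jm (Suc q) k)"
  then have i: "i < Suc q" and j: "j < k" unfolding Jm_def by auto
  have "(Jm (Suc q) q * Jm q k) $$ (i,j) = (\<Sum>l<q. Jm (Suc q) q $$ (i,l) * Jm q k $$ (l,j))"
    by (rule mult_entry[OF Jm_carrier Jm_carrier i j])
  also have "\<dots> = (\<Sum>l<q. if l = j then (if i = j then 1 else 0) else 0)"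
    using i j kq by (intro sum.cong refl, auto simp: Jm_def)
  also have "\<dots> = Jm (Suc q) k $$ (i,j)" using i j kq by (simp add: Jm_def)
  finally show "(Jm (Suc q) q * Jm q k) $$ (i,j) = Jm (Suc q) k $$ (i,j)" .
qed (auto simp: Jm_def)

lemma Jm_same: "Jm k k = 1\<^sub>m k"
  by (rule eq_matI, auto simp: Jm_def)

lemma ext: assumes U: "isom n k U" and kq: "k \<le> q" and qn: "q \<le> n"
  shows "\<exists>U'. isom n q U' \<and> U = U' * Jm q k"
  using kq qn
proof (induction q rule: dec_induct)
  case base
  have Uc: "U \<in> carrier_mat n k" using U unfolding isom_def by auto
  show ?case using U Uc unfolding Jm_same by (intro exI[of _ U], auto)
next
  case (step q)
  then obtain U' where U': "isom n q U'" and e: "U = U' * Jm q k" by auto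
  have U'c: "U' \<in> carrier_mat n q" using U' unfolding isom_def by auto
  from ext1[OF U'] step obtain U'' where U'': "isom n (Suc q) U''" and e2: "U' = U'' * Jm (Suc q) q" by auto
  have U''c: "U'' \<in> carrier_mat n (Suc q)" using U'' unfolding isom_def by auto
  have "U = U'' * (Jm (Suc q) q * Jm q k)"
    unfolding e e2 by (rule assoc_mult_mat[OF U''c Jm_carrier Jm_carrier])
  then have "U = U'' * Jm (Suc q) k" using Jm_mult step by simp
  then show ?case using U'' by blast
qed



lemma zero_mat_mult_vec[simp]: "w \<in> carrier_vec b \<Longrightarrow> 0\<^sub>m a b *\<^sub>v w = (0\<^sub>v a :: complex vec)"
  by (intro eq_vecI, auto)

lemma L1_zero: "L1 d (0\<^sub>m a b) = 0\<^sub>m (a*d) (b*d)"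
  by (rule eq_matI, auto simp: L1_def less_mult_imp_div_less)

lemma L1_herm_idem: assumes P: "herm_idem n P" and d: "0 < d" shows "herm_idem (n*d) (L1 d P)"
proof -
  have Pc: "P \<in> carrier_mat n n" and h: "mat_adjoint P = P" and i: "P * P = P" using P unfolding herm_idem_def by auto
  show ?thesis unfolding herm_idem_def
    using L1_adj[OF d Pc] L1_mult[OF Pc Pc d] h i Pc by simp
qed

lemma L2_herm_idem: assumes P: "herm_idem n P" shows "herm_idem (d*n) (L2 d P)"
proof -
  have Pc: "P \<in> carrier_mat n n" and h: "mat_adjoint P = P" and i: "P * P = P" using P unfolding herm_idem_def by auto
  show ?thesis unfolding herm_idem_def
    using L2_adj[OF Pc] L2_mult[OF Pc Pc] h i Pc by simp
qed

lemma orth_herm_idem: "orth_projector n r P \<Longrightarrow> herm_idem n P"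
  unfolding orth_projector_def herm_idem_def by auto

lemma L1_isom_inv: assumes B: "isom n m B" and d: "0 < d"
  shows "L1 d (mat_adjoint B) * L1 d B = 1\<^sub>m (m*d)"
proof -
  have Bc: "B \<in> carrier_mat n m" and I: "mat_adjoint B * B = 1\<^sub>m m" using B unfolding isom_def by auto
  show ?thesis using L1_mult[OF adj_carrier[OF Bc] Bc d] I L1_one[OF d] by simp
qed

lemma dirB:
  fixes d1 d2 d3 r1 r2 :: nat
  assumes d2: "0 < d2" and d3: "0 < d3" and r1: "r1 \<le> d1 * d2"
  and P1: "orth_projector (d1*d2) r1 P1" and P2: "orth_projector (d2*d3) r2 P2"
  shows "\<exists>Tx Ty. (d1*d2 - r1) * d3 \<le> kernel_dim (gqsat3_H d1 d2 d3 P1 P2)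
      + vec_space.rank (d1*r2) (G3_beta (d1*d2 - r1) d1 d2 d3 r2 Tx Ty)"
proof -
  define n1 where "n1 = d1*d2"
  define n2 where "n2 = d2*d3"
  define m where "m = n1 - r1"
  define N where "N = d1*d2*d3"
  have N1: "n1 * d3 = N" and N2: "d1 * n2 = N" unfolding n1_def n2_def N_def by (auto simp: mult.assoc)
  have P1c: "P1 \<in> carrier_mat n1 n1" and h1: "mat_adjoint P1 = P1" and i1: "P1 * P1 = P1" and rk1: "vec_space.rank n1 P1 = r1"
    using P1 unfolding orth_projector_def n1_def by auto
  have P2c: "P2 \<in> carrier_mat n2 n2" and h2: "mat_adjoint P2 = P2" and i2: "P2 * P2 = P2" and rk2: "vec_space.rank n2 P2 = r2"
    using P2 unfolding orth_projector_def n2_def by auto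
  have kd1: "kernel_dim P1 = m" using rank_nullity_mat[OF P1c] rk1 unfolding m_def by simp
  define E where "E = 1\<^sub>m n1 - P1"
  have Ec: "E \<in> carrier_mat n1 n1" unfolding E_def using P1c by auto
  from gs2[OF Ec] obtain k U X Y where U: "isom n1 k U" and X: "X \<in> carrier_mat k n1" and Y: "Y \<in> carrier_mat n1 k"
    and eE: "E = U * X" and eU: "U = E * Y" by blast
  have Uc: "U \<in> carrier_mat n1 k" and UI: "mat_adjoint U * U = 1\<^sub>m k" using U unfolding isom_def by auto
  have P1E: "P1 * E = 0\<^sub>m n1 n1"
  proof -
    have "P1 * E = P1 * 1\<^sub>m n1 - P1 * P1" unfolding E_def by (rule mult_minus_distrib_mat[OF P1c one_carrier_mat P1c])
    then show ?thesis using P1c i1 by (intro eq_matI, auto)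
  qed
  have P1U: "P1 * U = 0\<^sub>m n1 k"
  proof -
    have "P1 * U = (P1 * E) * Y" unfolding eU by (rule assoc_mult_mat[OF P1c Ec Y, symmetric])
    then show ?thesis unfolding P1E using Y by simp
  qed
  have mk: "m \<le> k"
  proof -
    have "kernel_dim P1 \<le> kernel_dim (0\<^sub>m 0 k :: complex mat)"
    proof (rule kdim_inj[OF P1c zero_carrier_mat adj_carrier[OF Uc]])
      fix x assume "x \<in> mat_kernel P1"
      then have "x \<in> carrier_vec n1" using mat_kernelD[OF P1c] by auto
      then show "mat_adjoint U *\<^sub>v x \<in> mat_kernel (0\<^sub>m 0 k :: complex mat)" unfolding ker_zero_rows using adj_carrier[OF Uc] by auto
    next
      fix x assume xk: "x \<in> mat_kernel P1" and z: "mat_adjoint U *\<^sub>v x = 0\<^sub>v k"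
      then have x: "x \<in> carrier_vec n1" and Px: "P1 *\<^sub>v x = 0\<^sub>v n1" using mat_kernelD[OF P1c] by auto
      have Ex: "E *\<^sub>v x = x" unfolding E_def using P1c x Px by (simp add: minus_mult_distrib_mat_vec[of _ n1 n1])
      have Xx: "X *\<^sub>v x \<in> carrier_vec k" using X x by auto
      have "X *\<^sub>v x = (mat_adjoint U * U) *\<^sub>v (X *\<^sub>v x)" unfolding UI using Xx by simp
      also have "\<dots> = mat_adjoint U *\<^sub>v (U *\<^sub>v (X *\<^sub>v x))" by (rule assoc_mult_mat_vec[OF adj_carrier[OF Uc] Uc Xx])
      also have "U *\<^sub>v (X *\<^sub>v x) = E *\<^sub>v x" unfolding eE by (rule assoc_mult_mat_vec[OF Uc X x, symmetric])
      finally have "X *\<^sub>v x = 0\<^sub>v k" unfolding Ex z .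
      then have "E *\<^sub>v x = 0\<^sub>v n1" unfolding eE using assoc_mult_mat_vec[OF Uc X x] Uc by simp
      then show "x = 0\<^sub>v n1" using Ex by simp
    qed
    then show ?thesis using kd1 kdim_zero_rows by simp
  qed
  define B where "B = U * Jm k m"
  have B: "isom n1 m B" unfolding B_def
    by (rule isom_mult[OF U], unfold isom_def, insert Jm_isom[OF mk], auto)
  have Bc: "B \<in> carrier_mat n1 m" using B unfolding isom_def by auto
  have P1B: "P1 * B = 0\<^sub>m n1 m" unfolding B_def
    using assoc_mult_mat[OF P1c Uc Jm_carrier, symmetric] P1U left_mult_zero_mat[OF Jm_carrier] by simp
  from gs2[OF P2c] obtain k2 V X2 Y2 where V: "isom n2 k2 V" and X2: "X2 \<in> carrier_mat k2 n2" and Y2: "Y2 \<in> carrier_mat n2 k2"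
    and eP2: "P2 = V * X2" and eV: "V = P2 * Y2" by blast
  have Vc: "V \<in> carrier_mat n2 k2" and VI: "mat_adjoint V * V = 1\<^sub>m k2" using V unfolding isom_def by auto
  have k2r: "k2 \<le> r2" using isom_rank[OF V] rank_mult_le[OF P2c Y2] eV rk2 by simp
  define J where "J = Jm r2 k2"
  have Jc: "J \<in> carrier_mat r2 k2" unfolding J_def by simp
  have JI: "mat_adjoint J * J = 1\<^sub>m k2" unfolding J_def by (rule Jm_isom[OF k2r])
  define Qs where "Qs = J * mat_adjoint V"
  have Qc: "Qs \<in> carrier_mat r2 n2" unfolding Qs_def using Jc Vc by auto
  define Z where "Z = mat_adjoint X2 * mat_adjoint J"
  have Zc: "Z \<in> carrier_mat n2 r2" unfolding Z_def using X2 Jc by auto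
  have P2Z: "P2 = Z * Qs"
  proof -
    have "P2 = mat_adjoint X2 * mat_adjoint V" using h2 adj_mult[OF Vc X2] eP2 by simp
    also have "mat_adjoint V = (mat_adjoint J * J) * mat_adjoint V" unfolding JI using Vc by simp
    also have "\<dots> = mat_adjoint J * Qs" unfolding Qs_def by (rule assoc_mult_mat[OF adj_carrier[OF Jc] Jc adj_carrier[OF Vc]])
    also have "mat_adjoint X2 * (mat_adjoint J * Qs) = Z * Qs" unfolding Z_def
      by (rule assoc_mult_mat[OF adj_carrier[OF X2] adj_carrier[OF Jc] Qc, symmetric])
    finally show ?thesis .
  qed
  define Tx where "Tx = (\<lambda>s t k. B $$ (t*d2+k, s))"
  define Ty where "Ty = (\<lambda>k c t. Qs $$ (t, k*d3+c))"
  have BM: "BM m d1 d2 Tx = B" unfolding Tx_def by (rule BM_inv, insert Bc, simp add: n1_def)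
  have QM: "QM r2 d2 d3 Ty = Qs" unfolding Ty_def by (rule QM_inv, insert Qc, simp add: n2_def)
  define beta where "beta = G3_beta m d1 d2 d3 r2 Tx Ty"
  have beq: "beta = L2 d1 Qs * L1 d3 B" unfolding beta_def using beta_eq[OF d2 d3] BM QM by simp
  have L1B: "L1 d3 B \<in> carrier_mat N (m*d3)" using L1_carrier[OF Bc, of d3] N1 by simp
  have L2Q: "L2 d1 Qs \<in> carrier_mat (d1*r2) N" using L2_carrier[OF Qc, of d1] N2 by simp
  have betac: "beta \<in> carrier_mat (d1*r2) (m*d3)" unfolding beq using L1B L2Q by auto
  define H where "H = gqsat3_H d1 d2 d3 P1 P2"
  have Heq: "H = L1 d3 P1 + L2 d1 P2" unfolding H_def
    by (rule H_eq[OF _ _ d2 d3], insert P1c P2c, auto simp: n1_def n2_def)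
  have L1P: "L1 d3 P1 \<in> carrier_mat N N" using L1_carrier[OF P1c, of d3] N1 by simp
  have L2P: "L2 d1 P2 \<in> carrier_mat N N" using L2_carrier[OF P2c, of d1] N2 by simp
  have L2Z: "L2 d1 Z \<in> carrier_mat N (d1*r2)" using L2_carrier[OF Zc, of d1] N2 by simp
  have Hc: "H \<in> carrier_mat N N" unfolding Heq using L1P L2P by auto
  have "kernel_dim beta \<le> kernel_dim H"
  proof (rule kdim_inj[OF betac Hc L1B])
    fix w assume wk: "w \<in> mat_kernel beta"
    then have w: "w \<in> carrier_vec (m*d3)" and bw: "beta *\<^sub>v w = 0\<^sub>v (d1*r2)" using mat_kernelD[OF betac] by auto
    have v: "L1 d3 B *\<^sub>v w \<in> carrier_vec N" using L1B w by auto
    have a1: "L1 d3 P1 *\<^sub>v (L1 d3 B *\<^sub>v w) = 0\<^sub>v N"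
    proof -
      have "L1 d3 P1 *\<^sub>v (L1 d3 B *\<^sub>v w) = (L1 d3 P1 * L1 d3 B) *\<^sub>v w" by (rule assoc_mult_mat_vec[OF L1P L1B w, symmetric])
      also have "L1 d3 P1 * L1 d3 B = L1 d3 (P1 * B)" by (rule L1_mult[OF P1c Bc d3, symmetric])
      also have "\<dots> = 0\<^sub>m N (m*d3)" unfolding P1B L1_zero N1 ..
      finally show ?thesis using w by simp
    qed
    have a2: "L2 d1 P2 *\<^sub>v (L1 d3 B *\<^sub>v w) = 0\<^sub>v N"
    proof -
      have "L2 d1 P2 = L2 d1 Z * L2 d1 Qs" unfolding P2Z by (rule L2_mult[OF Zc Qc])
      then have "L2 d1 P2 *\<^sub>v (L1 d3 B *\<^sub>v w) = L2 d1 Z *\<^sub>v (L2 d1 Qs *\<^sub>v (L1 d3 B *\<^sub>v w))"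
        using assoc_mult_mat_vec[OF L2Z L2Q v] by simp
      also have "L2 d1 Qs *\<^sub>v (L1 d3 B *\<^sub>v w) = beta *\<^sub>v w" unfolding beq by (rule assoc_mult_mat_vec[OF L2Q L1B w, symmetric])
      finally show ?thesis unfolding bw using L2Z by simp
    qed
    have "H *\<^sub>v (L1 d3 B *\<^sub>v w) = L1 d3 P1 *\<^sub>v (L1 d3 B *\<^sub>v w) + L2 d1 P2 *\<^sub>v (L1 d3 B *\<^sub>v w)"
      unfolding Heq by (rule add_mult_distrib_mat_vec[OF L1P L2P v])
    also have "\<dots> = 0\<^sub>v N" unfolding a1 a2 by simp
    finally show "L1 d3 B *\<^sub>v w \<in> mat_kernel H" using Hc v by (auto intro: mat_kernelI)
  next
    fix w assume wk: "w \<in> mat_kernel beta" and z: "L1 d3 B *\<^sub>v w = 0\<^sub>v N"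
    then have w: "w \<in> carrier_vec (m*d3)" using mat_kernelD[OF betac] by auto
    have La: "L1 d3 (mat_adjoint B) \<in> carrier_mat (m*d3) N" using L1_carrier[OF adj_carrier[OF Bc], of d3] N1 by simp
    have "w = (L1 d3 (mat_adjoint B) * L1 d3 B) *\<^sub>v w" unfolding L1_isom_inv[OF B d3] using w by simp
    also have "\<dots> = L1 d3 (mat_adjoint B) *\<^sub>v (L1 d3 B *\<^sub>v w)" by (rule assoc_mult_mat_vec[OF La L1B w])
    finally show "w = 0\<^sub>v (m*d3)" unfolding z using La by simp
  qed
  moreover have "vec_space.rank (d1*r2) beta + kernel_dim beta = m*d3" by (rule rank_nullity_mat[OF betac])
  ultimately have "m*d3 \<le> kernel_dim H + vec_space.rank (d1*r2) beta" by linarith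
  then show ?thesis unfolding H_def beta_def m_def n1_def by blast
qed



lemma dirA:
  fixes d1 d2 d3 r1 r2 :: nat
  assumes d2: "0 < d2" and d3: "0 < d3" and r1: "r1 \<le> d1 * d2" and r2: "r2 \<le> d2 * d3"
  shows "\<exists>P1 P2. orth_projector (d1*d2) r1 P1 \<and> orth_projector (d2*d3) r2 P2 \<and>
     kernel_dim (gqsat3_H d1 d2 d3 P1 P2) + vec_space.rank (d1*r2) (G3_beta (d1*d2 - r1) d1 d2 d3 r2 Tx Ty) \<le> (d1*d2 - r1) * d3"
proof -
  define n1 where "n1 = d1*d2"
  define n2 where "n2 = d2*d3"
  define m where "m = n1 - r1"
  define N where "N = d1*d2*d3"
  have N1: "n1 * d3 = N" and N2: "d1 * n2 = N" unfolding n1_def n2_def N_def by (auto simp: mult.assoc)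
  have mn: "m \<le> n1" unfolding m_def by simp
  have r2n: "r2 \<le> n2" using r2 unfolding n2_def .
  define B where "B = BM m d1 d2 Tx"
  define Qs where "Qs = QM r2 d2 d3 Ty"
  have Bc: "B \<in> carrier_mat n1 m" unfolding B_def n1_def by simp
  have Qc: "Qs \<in> carrier_mat r2 n2" unfolding Qs_def n2_def by simp
  define beta where "beta = G3_beta m d1 d2 d3 r2 Tx Ty"
  have beq: "beta = L2 d1 Qs * L1 d3 B" unfolding beta_def B_def Qs_def by (rule beta_eq[OF d2 d3])
  from gs2[OF Bc] obtain k0 U0 X0 Y0 where k0: "k0 \<le> m" and U0: "isom n1 k0 U0" and X0: "X0 \<in> carrier_mat k0 m"
    and eB: "B = U0 * X0" by blast
  from ext[OF U0 k0 mn] obtain U where U: "isom n1 m U" and eU0: "U0 = U * Jm m k0" by blast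
  have Uc: "U \<in> carrier_mat n1 m" and UI: "mat_adjoint U * U = 1\<^sub>m m" using U unfolding isom_def by auto
  define XB where "XB = Jm m k0 * X0"
  have XBc: "XB \<in> carrier_mat m m" unfolding XB_def using mult_carrier_mat[OF Jm_carrier X0] .
  have eB': "B = U * XB" unfolding eB eU0 XB_def by (rule assoc_mult_mat[OF Uc Jm_carrier X0])
  have QHc: "mat_adjoint Qs \<in> carrier_mat n2 r2" using Qc by simp
  from gs2[OF QHc] obtain k1 V0 X1 Y1 where k1: "k1 \<le> r2" and V0: "isom n2 k1 V0" and X1: "X1 \<in> carrier_mat k1 r2"
    and eQ: "mat_adjoint Qs = V0 * X1" by blast
  from ext[OF V0 k1 r2n] obtain V where V: "isom n2 r2 V" and eV0: "V0 = V * Jm r2 k1" by blast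
  have Vc: "V \<in> carrier_mat n2 r2" and VI: "mat_adjoint V * V = 1\<^sub>m r2" using V unfolding isom_def by auto
  define XQ where "XQ = Jm r2 k1 * X1"
  have XQc: "XQ \<in> carrier_mat r2 r2" unfolding XQ_def using mult_carrier_mat[OF Jm_carrier X1] .
  have eQ': "mat_adjoint Qs = V * XQ" unfolding eQ eV0 XQ_def by (rule assoc_mult_mat[OF Vc Jm_carrier X1])
  have eQs: "Qs = mat_adjoint XQ * mat_adjoint V"
    using arg_cong[OF eQ', of mat_adjoint] adj_mult[OF Vc XQc] by simp
  define Pi1 where "Pi1 = 1\<^sub>m n1 - U * mat_adjoint U"
  define Pi2 where "Pi2 = V * mat_adjoint V"
  have hPi1: "herm_idem n1 Pi1" unfolding Pi1_def by (rule herm_idem_compl[OF isom_proj_herm_idem[OF U]])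
  have hPi2: "herm_idem n2 Pi2" unfolding Pi2_def by (rule isom_proj_herm_idem[OF V])
  have Pi1c: "Pi1 \<in> carrier_mat n1 n1" using hPi1 unfolding herm_idem_def by auto
  have Pi2c: "Pi2 \<in> carrier_mat n2 n2" using hPi2 unfolding herm_idem_def by auto
  have oP1: "orth_projector (d1*d2) r1 Pi1"
    using hPi1 isom_compl_rank[OF U] r1 unfolding orth_projector_def herm_idem_def Pi1_def m_def n1_def by auto
  have oP2: "orth_projector (d2*d3) r2 Pi2"
    using hPi2 isom_proj_rank[OF V] unfolding orth_projector_def herm_idem_def Pi2_def n2_def by auto
  define H where "H = gqsat3_H d1 d2 d3 Pi1 Pi2"
  have Heq: "H = L1 d3 Pi1 + L2 d1 Pi2" unfolding H_def
    by (rule H_eq[OF _ _ d2 d3], insert Pi1c Pi2c, auto simp: n1_def n2_def)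
  have L1P: "L1 d3 Pi1 \<in> carrier_mat N N" using L1_carrier[OF Pi1c, of d3] N1 by simp
  have L2P: "L2 d1 Pi2 \<in> carrier_mat N N" using L2_carrier[OF Pi2c, of d1] N2 by simp
  have Hc: "H \<in> carrier_mat N N" unfolding Heq using L1P L2P by auto
  have hL1: "herm_idem N (L1 d3 Pi1)" using L1_herm_idem[OF hPi1 d3] N1 by simp
  have hL2: "herm_idem N (L2 d1 Pi2)" using L2_herm_idem[OF hPi2, of d1] N2 by simp
  have L1U: "L1 d3 U \<in> carrier_mat N (m*d3)" using L1_carrier[OF Uc, of d3] N1 by simp
  have L1Ua: "L1 d3 (mat_adjoint U) \<in> carrier_mat (m*d3) N" using L1_carrier[OF adj_carrier[OF Uc], of d3] N1 by simp
  have L2Va: "L2 d1 (mat_adjoint V) \<in> carrier_mat (d1*r2) N" using L2_carrier[OF adj_carrier[OF Vc], of d1] N2 by simp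
  define beta' where "beta' = L2 d1 (mat_adjoint V) * L1 d3 U"
  have b'c: "beta' \<in> carrier_mat (d1*r2) (m*d3)" unfolding beta'_def using L2Va L1U by auto
  have UUa: "U * mat_adjoint U = 1\<^sub>m n1 - Pi1" unfolding Pi1_def using Uc by (intro eq_matI, auto)
  have L1UU: "L1 d3 U * L1 d3 (mat_adjoint U) = 1\<^sub>m N - L1 d3 Pi1"
  proof -
    have "L1 d3 U * L1 d3 (mat_adjoint U) = L1 d3 (U * mat_adjoint U)" by (rule L1_mult[OF Uc adj_carrier[OF Uc] d3, symmetric])
    also have "\<dots> = L1 d3 (1\<^sub>m n1) - L1 d3 Pi1" unfolding UUa by (rule L1_minus[OF one_carrier_mat Pi1c])
    finally show ?thesis unfolding L1_one[OF d3] N1 .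
  qed
  have VaPi2: "mat_adjoint V * Pi2 = mat_adjoint V"
    unfolding Pi2_def using assoc_mult_mat[OF adj_carrier[OF Vc] Vc adj_carrier[OF Vc], symmetric] VI left_mult_one_mat[OF adj_carrier[OF Vc]]
    by simp
  have "kernel_dim H \<le> kernel_dim beta'"
  proof (rule kdim_inj[OF Hc b'c L1Ua])
    fix v assume vk: "v \<in> mat_kernel H"
    then have v: "v \<in> carrier_vec N" and Hv: "H *\<^sub>v v = 0\<^sub>v N" using mat_kernelD[OF Hc] by auto
    have z1: "L1 d3 Pi1 *\<^sub>v v = 0\<^sub>v N" by (rule psd_split[OF hL1 hL2 v], unfold Heq[symmetric], rule Hv)
    have z2: "L2 d1 Pi2 *\<^sub>v v = 0\<^sub>v N"
      by (rule psd_split[OF hL2 hL1 v], subst comm_add_mat[OF L2P L1P], unfold Heq[symmetric], rule Hv)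
    have bk: "L1 d3 U *\<^sub>v (L1 d3 (mat_adjoint U) *\<^sub>v v) = v"
    proof -
      have "L1 d3 U *\<^sub>v (L1 d3 (mat_adjoint U) *\<^sub>v v) = (1\<^sub>m N - L1 d3 Pi1) *\<^sub>v v"
        unfolding L1UU[symmetric] by (rule assoc_mult_mat_vec[OF L1U L1Ua v, symmetric])
      also have "\<dots> = v" using v L1P z1 by (simp add: minus_mult_distrib_mat_vec[OF one_carrier_mat L1P v])
      finally show ?thesis .
    qed
    have "beta' *\<^sub>v (L1 d3 (mat_adjoint U) *\<^sub>v v) = L2 d1 (mat_adjoint V) *\<^sub>v v"
      unfolding beta'_def using assoc_mult_mat_vec[OF L2Va L1U, of "L1 d3 (mat_adjoint U) *\<^sub>v v"] L1Ua v bk by auto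
    also have "L2 d1 (mat_adjoint V) = L2 d1 (mat_adjoint V) * L2 d1 Pi2"
      using L2_mult[OF adj_carrier[OF Vc] Pi2c, of d1] VaPi2 by simp
    also have "(L2 d1 (mat_adjoint V) * L2 d1 Pi2) *\<^sub>v v = L2 d1 (mat_adjoint V) *\<^sub>v (L2 d1 Pi2 *\<^sub>v v)"
      by (rule assoc_mult_mat_vec[OF L2Va L2P v])
    also have "\<dots> = 0\<^sub>v (d1*r2)" unfolding z2 using L2Va by simp
    finally show "L1 d3 (mat_adjoint U) *\<^sub>v v \<in> mat_kernel beta'" using b'c L1Ua v by (auto intro: mat_kernelI)
  next
    fix v assume vk: "v \<in> mat_kernel H" and z: "L1 d3 (mat_adjoint U) *\<^sub>v v = 0\<^sub>v (m*d3)"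
    then have v: "v \<in> carrier_vec N" and Hv: "H *\<^sub>v v = 0\<^sub>v N" using mat_kernelD[OF Hc] by auto
    have z1: "L1 d3 Pi1 *\<^sub>v v = 0\<^sub>v N" by (rule psd_split[OF hL1 hL2 v], unfold Heq[symmetric], rule Hv)
    have "L1 d3 U *\<^sub>v (L1 d3 (mat_adjoint U) *\<^sub>v v) = (1\<^sub>m N - L1 d3 Pi1) *\<^sub>v v"
      unfolding L1UU[symmetric] by (rule assoc_mult_mat_vec[OF L1U L1Ua v, symmetric])
    also have "\<dots> = v" using v L1P z1 by (simp add: minus_mult_distrib_mat_vec[OF one_carrier_mat L1P v])
    finally show "v = 0\<^sub>v N" unfolding z using L1U by simp
  qed
  moreover have "vec_space.rank (d1*r2) beta \<le> vec_space.rank (d1*r2) beta'"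
  proof -
    have L2XQ: "L2 d1 (mat_adjoint XQ) \<in> carrier_mat (d1*r2) (d1*r2)" using L2_carrier[OF adj_carrier[OF XQc]] by simp
    have L1XB: "L1 d3 XB \<in> carrier_mat (m*d3) (m*d3)" using L1_carrier[OF XBc] by simp
    have "beta = (L2 d1 (mat_adjoint XQ) * L2 d1 (mat_adjoint V)) * (L1 d3 U * L1 d3 XB)"
      unfolding beq eQs eB' L2_mult[OF adj_carrier[OF XQc] adj_carrier[OF Vc]] L1_mult[OF Uc XBc d3] ..
    also have "\<dots> = L2 d1 (mat_adjoint XQ) * (beta' * L1 d3 XB)"
      unfolding beta'_def
      using assoc_mult_mat[OF L2XQ L2Va mult_carrier_mat[OF L1U L1XB]]
        assoc_mult_mat[OF L2Va L1U L1XB] by simp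
    finally have eb: "beta = L2 d1 (mat_adjoint XQ) * (beta' * L1 d3 XB)" .
    have "vec_space.rank (d1*r2) beta \<le> vec_space.rank (d1*r2) (beta' * L1 d3 XB)"
      unfolding eb by (rule rank_mult_left[OF L2XQ mult_carrier_mat[OF b'c L1XB]])
    also have "\<dots> \<le> vec_space.rank (d1*r2) beta'" by (rule rank_mult_le[OF b'c L1XB])
    finally show ?thesis .
  qed
  moreover have "vec_space.rank (d1*r2) beta' + kernel_dim beta' = m*d3" by (rule rank_nullity_mat[OF b'c])
  ultimately have "kernel_dim H + vec_space.rank (d1*r2) beta \<le> m*d3" by linarith
  then show ?thesis using oP1 oP2 unfolding H_def beta_def m_def n1_def by blast
qed

theorem claim6p1:
  fixes d1 d2 d3 r1 r2 :: nat
  assumes "0 < d1" "0 < d2" "0 < d3" "0 < r1" "0 < r2"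
    and "r1 < d1 * d2" and "r2 \<le> d2 * d3"
  shows "int (GQSAT3 d1 d2 d3 r1 r2)
       = int d3 * (int (d1 * d2) - int r1) - int (QMF_G3 (d1 * d2 - r1) d1 d2 d3 r2)"
proof -
  have d2: "0 < d2" and d3: "0 < d3" using assms by auto
  have r1: "r1 \<le> d1 * d2" and r2: "r2 \<le> d2 * d3" using assms by auto
  define m where "m = d1 * d2 - r1"
  define S where "S = {kernel_dim (gqsat3_H d1 d2 d3 P1 P2) | P1 P2.
      orth_projector (d1*d2) r1 P1 \<and> orth_projector (d2*d3) r2 P2}"
  define R where "R = {vec_space.rank (d1*r2) (G3_beta m d1 d2 d3 r2 Tx Ty) | Tx Ty. True}"
  have G: "GQSAT3 d1 d2 d3 r1 r2 = Inf S" unfolding GQSAT3_def S_def ..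
  have Q: "QMF_G3 m d1 d2 d3 r2 = Sup R" unfolding QMF_G3_def R_def ..
  have Rb: "x \<le> m * d3" if "x \<in> R" for x
  proof -
    from that obtain Tx Ty where x: "x = vec_space.rank (d1*r2) (G3_beta m d1 d2 d3 r2 Tx Ty)" unfolding R_def by auto
    have "G3_beta m d1 d2 d3 r2 Tx Ty \<in> carrier_mat (d1*r2) (m*d3)" unfolding G3_beta_def by auto
    from rank_nullity_mat[OF this] show ?thesis unfolding x by linarith
  qed
  have Rne: "R \<noteq> {}" unfolding R_def by auto
  have Rbdd: "bdd_above R" using Rb by (intro bdd_aboveI, auto)
  have Rfin: "finite R" using Rb by (intro finite_subset[of R "{..m*d3}"], auto)
  have qR: "Sup R \<in> R" using cSup_eq_Max[OF Rfin Rne] Max_in[OF Rfin Rne] by simp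
  have Sne: "S \<noteq> {}"
  proof -
    from dirA[OF d2 d3 r1 r2, of "\<lambda>_ _ _. 0" "\<lambda>_ _ _. 0"] obtain P1 P2 where
      "orth_projector (d1*d2) r1 P1" "orth_projector (d2*d3) r2 P2" by blast
    then show ?thesis unfolding S_def by blast
  qed
  have gS: "Inf S \<in> S" by (rule Inf_nat_def1[OF Sne])
  have le1: "Inf S + Sup R \<le> m * d3"
  proof -
    from qR obtain Tx Ty where q: "Sup R = vec_space.rank (d1*r2) (G3_beta m d1 d2 d3 r2 Tx Ty)" unfolding R_def by auto
    from dirA[OF d2 d3 r1 r2, of Tx Ty] obtain P1 P2 where o1: "orth_projector (d1*d2) r1 P1"
      and o2: "orth_projector (d2*d3) r2 P2"
      and le: "kernel_dim (gqsat3_H d1 d2 d3 P1 P2) + vec_space.rank (d1*r2) (G3_beta m d1 d2 d3 r2 Tx Ty) \<le> m * d3"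
      unfolding m_def by blast
    have "kernel_dim (gqsat3_H d1 d2 d3 P1 P2) \<in> S" unfolding S_def using o1 o2 by blast
    then have "Inf S \<le> kernel_dim (gqsat3_H d1 d2 d3 P1 P2)" by (rule cInf_lower, simp)
    then show ?thesis using le q by linarith
  qed
  have le2: "m * d3 \<le> Inf S + Sup R"
  proof -
    from gS obtain P1 P2 where g: "Inf S = kernel_dim (gqsat3_H d1 d2 d3 P1 P2)" and o1: "orth_projector (d1*d2) r1 P1"
      and o2: "orth_projector (d2*d3) r2 P2" unfolding S_def by blast
    from dirB[OF d2 d3 r1 o1 o2] obtain Tx Ty where
      le: "m * d3 \<le> kernel_dim (gqsat3_H d1 d2 d3 P1 P2) + vec_space.rank (d1*r2) (G3_beta m d1 d2 d3 r2 Tx Ty)"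
      unfolding m_def by blast
    have "vec_space.rank (d1*r2) (G3_beta m d1 d2 d3 r2 Tx Ty) \<in> R" unfolding R_def by blast
    then have "vec_space.rank (d1*r2) (G3_beta m d1 d2 d3 r2 Tx Ty) \<le> Sup R" by (rule cSup_upper[OF _ Rbdd])
    then show ?thesis using le g by linarith
  qed
  have eq: "Inf S + Sup R = m * d3" using le1 le2 by linarith
  have "int (m * d3) = int d3 * (int (d1 * d2) - int r1)" unfolding m_def using r1 by (simp add: of_nat_diff)
  moreover have "int (Inf S) + int (Sup R) = int (m * d3)" using eq by (metis of_nat_add)
  ultimately have "int (Inf S) = int d3 * (int (d1 * d2) - int r1) - int (Sup R)" by linarith
  then show ?thesis unfolding G Q[unfolded m_def] .
qed

end
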